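(* In $\mathrm U_q(\mathfrak{gl}_3)[[\zeta]]$ one has $$1-C^{(1)}\zeta-C^{(2)}\zeta^2-C^{(3)}\zeta^3=N'_{11}(q^2\zeta)\,N''_{22}(\zeta)\,N'''_{33}(q^{-2}\zeta).$$
   Context: Setting: $\hbar\in\mathbb C$, $q=e^\hbar$, $q^2\neq1$, $\kappa_q=q-q^{-1}$, $[\nu]_q=(q^\nu-q^{-\nu})/\kappa_q$. Let $\mathfrak g=\mathbb CG_1\oplus\mathbb CG_2\oplus\mathbb CG_3$ and define linear forms $\alpha_1,\alpha_2$ on $\mathfrak g$ by $\alpha_1(G_1)=1,\alpha_1(G_2)=-1,\alpha_1(G_3)=0$, $\alpha_2(G_1)=0,\alpha_2(G_2)=1,\alpha_2(G_3)=-1$; put $H_1=G_1-G_2$, $H_2=G_2-G_3$. $\mathrm U_q(\mathfrak{gl}_3)$ is the unital associative $\mathbb C$-algebra generated by $E_1,E_2,F_1,F_2$ and symbols $q^X$, $X\in\mathfrak g$, with relations $q^0=1$, $q^{X_1}q^{X_2}=q^{X_1+X_2}$, $q^XE_iq^{-X}=q^{\alpha_i(X)}E_i$, $q^XF_iq^{-X}=q^{-\alpha_i(X)}F_i$, $[E_i,F_j]=\delta_{ij}(q^{H_i}-q^{-H_i})/\kappa_q$, and for $i\ne j$ the $q$-Serre relations $E_i^2E_j-[2]_qE_iE_jE_i+E_jE_i^2=0$, $F_i^2F_j-[2]_qF_iF_jF_i+F_jF_i^2=0$. For $\nu\in\mathbb C$ one writes $q^{X+\nu}=q^\nu q^X$.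 Further $E_3=E_1E_2-q^{-1}E_2E_1$, $F_3=F_2F_1-qF_1F_2$. Central elements: $C^{(1)}=q^{-2G_1-2}+q^{-2G_2}+q^{-2G_3+2}+\kappa_q^2F_1E_1q^{-G_1-G_2-1}+\kappa_q^2F_2E_2q^{-G_2-G_3+1}+\kappa_q^2F_3E_3q^{-G_1-G_3+1}-\kappa_q^3F_3E_1E_2q^{-G_1-G_3}$, $C^{(2)}=-q^{-2G_1-2G_2-2}-q^{-2G_1-2G_3}-q^{-2G_2-2G_3+2}-\kappa_q^2F_1E_1q^{-G_1-G_2-2G_3+1}-\kappa_q^2F_2E_2q^{-2G_1-G_2-G_3-1}-\kappa_q^2F_3E_3q^{-G_1-2G_2-G_3+1}-\kappa_q^3F_1F_2E_3q^{-G_1-2G_2-G_3+1}$, $C^{(3)}=q^{-2(G_1+G_2+G_3)}$. Matrix entries: in $\mathrm U_q(\mathfrak{gl}_3)[[\zeta]]$ ($\zeta$ a formal variable; series with constant term $1$ are invertible) let $N'_{11}(\zeta)=1-\zeta q^{-2G_1}$, $N'_{22}(\zeta)=1-\zeta q^{-2G_2}$, $N'_{33}(\zeta)=1-\zeta q^{-2G_3}$, $N'_{12}=\kappa_q qF_1q^{-G_1-G_2}$, $N'_{23}=\kappa_q qF_2q^{-G_2-G_3}$, $N'_{13}=\kappa_q qF_3q^{-G_1-G_3}$, $N'_{21}=\kappa_qE_1$, $N'_{32}=\kappa_qE_2$, $N'_{31}=\kappa_qE_3$; and $N''_{22}(\zeta)=N'_{22}(\zeta)-\zeta N'_{21}N'_{11}(\zeta)^{-1}N'_{12}$,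 $N''_{23}(\zeta)=N'_{23}-N'_{21}N'_{11}(\zeta)^{-1}N'_{13}$, $N''_{32}(\zeta)=N'_{32}-\zeta N'_{31}N'_{11}(\zeta)^{-1}N'_{12}$, $N''_{33}(\zeta)=N'_{33}(\zeta)-\zeta N'_{31}N'_{11}(\zeta)^{-1}N'_{13}$, $N'''_{33}(\zeta)=N''_{33}(\zeta)-\zeta N''_{32}(\zeta)N''_{22}(\zeta)^{-1}N''_{23}(\zeta)$. For $c\in\mathbb C$, $N(c\zeta)$ denotes substitution $\zeta\mapsto c\zeta$. *)

theory Defs
  imports Complex_Main "HOL-Computational_Algebra.Formal_Power_Series"
begin

(* An element X = a1 G1 + a2 G2 + a3 G3 of g is encoded by its coordinates (a1,a2,a3);
   the generator q^X is  K a1 a2 a3.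
   The algebra U_q(gl_3) is treated via its universal property: an arbitrary unital
   associative C-algebra A (a ring_1 with a central unital ring homomorphism
   sc : C -> A giving the scalars) together with elements E1 E2 F1 F2 and K
   satisfying all defining relations. *)

definition qq :: "complex \<Rightarrow> complex" where "qq h = exp h"
definition qpow :: "complex \<Rightarrow> complex \<Rightarrow> complex" where "qpow h nu = exp (h * nu)"
definition kap :: "complex \<Rightarrow> complex" where "kap h = qq h - inverse (qq h)"
definition qnum :: "complex \<Rightarrow> complex \<Rightarrow> complex"
  where "qnum h nu = (qpow h nu - qpow h (- nu)) / kap h"

definition is_C_algebra :: "(complex \<Rightarrow> 'a::ring_1) \<Rightarrow> bool" where
  "is_C_algebra sc \<longleftrightarrow> sc 1 = 1 \<and> (\<forall>x y. sc (x + y) = sc x + sc y)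
     \<and> (\<forall>x y. sc (x * y) = sc x * sc y) \<and> (\<forall>z a. sc z * a = a * sc z)"

(* alpha_1(X) = a1 - a2, alpha_2(X) = a2 - a3 ; H1 = G1 - G2, H2 = G2 - G3 *)
definition Uq_gl3_rel ::
  "complex \<Rightarrow> (complex \<Rightarrow> 'a::ring_1) \<Rightarrow> 'a \<Rightarrow> 'a \<Rightarrow> 'a \<Rightarrow> 'a
   \<Rightarrow> (complex \<Rightarrow> complex \<Rightarrow> complex \<Rightarrow> 'a) \<Rightarrow> bool" where
  "Uq_gl3_rel h sc E1 E2 F1 F2 K \<longleftrightarrow>
     K 0 0 0 = 1
   \<and> (\<forall>a1 a2 a3 b1 b2 b3. K (a1 + b1) (a2 + b2) (a3 + b3) = K a1 a2 a3 * K b1 b2 b3)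
   \<and> (\<forall>a1 a2 a3. K a1 a2 a3 * E1 * K (-a1) (-a2) (-a3) = sc (qpow h (a1 - a2)) * E1)
   \<and> (\<forall>a1 a2 a3. K a1 a2 a3 * E2 * K (-a1) (-a2) (-a3) = sc (qpow h (a2 - a3)) * E2)
   \<and> (\<forall>a1 a2 a3. K a1 a2 a3 * F1 * K (-a1) (-a2) (-a3) = sc (qpow h (-(a1 - a2))) * F1)
   \<and> (\<forall>a1 a2 a3. K a1 a2 a3 * F2 * K (-a1) (-a2) (-a3) = sc (qpow h (-(a2 - a3))) * F2)
   \<and> E1 * F1 - F1 * E1 = sc (inverse (kap h)) * (K 1 (-1) 0 - K (-1) 1 0)
   \<and> E2 * F2 - F2 * E2 = sc (inverse (kap h)) * (K 0 1 (-1) - K 0 (-1) 1)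
   \<and> E1 * F2 - F2 * E1 = 0
   \<and> E2 * F1 - F1 * E2 = 0
   \<and> E1 * E1 * E2 - sc (qnum h 2) * (E1 * E2 * E1) + E2 * E1 * E1 = 0
   \<and> E2 * E2 * E1 - sc (qnum h 2) * (E2 * E1 * E2) + E1 * E2 * E2 = 0
   \<and> F1 * F1 * F2 - sc (qnum h 2) * (F1 * F2 * F1) + F2 * F1 * F1 = 0
   \<and> F2 * F2 * F1 - sc (qnum h 2) * (F2 * F1 * F2) + F1 * F2 * F2 = 0"

(* q^{X + nu} = q^nu q^X *)
definition Kq :: "complex \<Rightarrow> (complex \<Rightarrow> 'a::ring_1) \<Rightarrow> (complex \<Rightarrow> complex \<Rightarrow> complex \<Rightarrow> 'a)
   \<Rightarrow> complex \<Rightarrow> complex \<Rightarrow> complex \<Rightarrow> complex \<Rightarrow> 'a" where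
  "Kq h sc K nu a1 a2 a3 = sc (qpow h nu) * K a1 a2 a3"

definition E3 :: "complex \<Rightarrow> (complex \<Rightarrow> 'a::ring_1) \<Rightarrow> 'a \<Rightarrow> 'a \<Rightarrow> 'a" where
  "E3 h sc E1 E2 = E1 * E2 - sc (inverse (qq h)) * (E2 * E1)"

definition F3 :: "complex \<Rightarrow> (complex \<Rightarrow> 'a::ring_1) \<Rightarrow> 'a \<Rightarrow> 'a \<Rightarrow> 'a" where
  "F3 h sc F1 F2 = F2 * F1 - sc (qq h) * (F1 * F2)"

definition Cas1 :: "complex \<Rightarrow> (complex \<Rightarrow> 'a::ring_1) \<Rightarrow> 'a \<Rightarrow> 'a \<Rightarrow> 'a \<Rightarrow> 'a
   \<Rightarrow> (complex \<Rightarrow> complex \<Rightarrow> complex \<Rightarrow> 'a) \<Rightarrow> 'a" where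
  "Cas1 h sc E1 E2 F1 F2 K =
     Kq h sc K (-2) (-2) 0 0 + K 0 (-2) 0 + Kq h sc K 2 0 0 (-2)
   + sc (kap h ^ 2) * F1 * E1 * Kq h sc K (-1) (-1) (-1) 0
   + sc (kap h ^ 2) * F2 * E2 * Kq h sc K 1 0 (-1) (-1)
   + sc (kap h ^ 2) * F3 h sc F1 F2 * E3 h sc E1 E2 * Kq h sc K 1 (-1) 0 (-1)
   - sc (kap h ^ 3) * F3 h sc F1 F2 * E1 * E2 * K (-1) 0 (-1)"

definition Cas2 :: "complex \<Rightarrow> (complex \<Rightarrow> 'a::ring_1) \<Rightarrow> 'a \<Rightarrow> 'a \<Rightarrow> 'a \<Rightarrow> 'a
   \<Rightarrow> (complex \<Rightarrow> complex \<Rightarrow> complex \<Rightarrow> 'a) \<Rightarrow> 'a" where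
  "Cas2 h sc E1 E2 F1 F2 K =
     - Kq h sc K (-2) (-2) (-2) 0 - K (-2) 0 (-2) - Kq h sc K 2 0 (-2) (-2)
   - sc (kap h ^ 2) * F1 * E1 * Kq h sc K 1 (-1) (-1) (-2)
   - sc (kap h ^ 2) * F2 * E2 * Kq h sc K (-1) (-2) (-1) (-1)
   - sc (kap h ^ 2) * F3 h sc F1 F2 * E3 h sc E1 E2 * Kq h sc K 1 (-1) (-2) (-1)
   - sc (kap h ^ 3) * F1 * F2 * E3 h sc E1 E2 * Kq h sc K 1 (-1) (-2) (-1)"

definition Cas3 :: "(complex \<Rightarrow> complex \<Rightarrow> complex \<Rightarrow> 'a::ring_1) \<Rightarrow> 'a" where
  "Cas3 K = K (-2) (-2) (-2)"

definition fps_inv2 :: "'a::ring_1 fps \<Rightarrow> 'a fps" where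
  "fps_inv2 f = (THE g. f * g = 1 \<and> g * f = 1)"

definition fps_subst_scale :: "(complex \<Rightarrow> 'a::ring_1) \<Rightarrow> complex \<Rightarrow> 'a fps \<Rightarrow> 'a fps" where
  "fps_subst_scale sc c f = Abs_fps (\<lambda>n. sc (c ^ n) * fps_nth f n)"

definition Nmat :: "complex \<Rightarrow> (complex \<Rightarrow> 'a::ring_1) \<Rightarrow> 'a \<Rightarrow> 'a \<Rightarrow> 'a \<Rightarrow> 'a
   \<Rightarrow> (complex \<Rightarrow> complex \<Rightarrow> complex \<Rightarrow> 'a) \<Rightarrow> nat \<Rightarrow> nat \<Rightarrow> 'a fps" where
  "Nmat h sc E1 E2 F1 F2 K i j =
    (if i = 1 \<and> j = 1 then 1 - fps_X * fps_const (K (-2) 0 0)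
     else if i = 2 \<and> j = 2 then 1 - fps_X * fps_const (K 0 (-2) 0)
     else if i = 3 \<and> j = 3 then 1 - fps_X * fps_const (K 0 0 (-2))
     else if i = 1 \<and> j = 2 then fps_const (sc (kap h) * sc (qq h) * F1 * K (-1) (-1) 0)
     else if i = 2 \<and> j = 3 then fps_const (sc (kap h) * sc (qq h) * F2 * K 0 (-1) (-1))
     else if i = 1 \<and> j = 3 then fps_const (sc (kap h) * sc (qq h) * F3 h sc F1 F2 * K (-1) 0 (-1))
     else if i = 2 \<and> j = 1 then fps_const (sc (kap h) * E1)
     else if i = 3 \<and> j = 2 then fps_const (sc (kap h) * E2)
     else if i = 3 \<and> j = 1 then fps_const (sc (kap h) * E3 h sc E1 E2)
     else 0)"

definition N2_22 where
  "N2_22 h sc E1 E2 F1 F2 K = (let N = Nmat h sc E1 E2 F1 F2 K in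
     N 2 2 - fps_X * N 2 1 * fps_inv2 (N 1 1) * N 1 2)"
definition N2_23 where
  "N2_23 h sc E1 E2 F1 F2 K = (let N = Nmat h sc E1 E2 F1 F2 K in
     N 2 3 - N 2 1 * fps_inv2 (N 1 1) * N 1 3)"
definition N2_32 where
  "N2_32 h sc E1 E2 F1 F2 K = (let N = Nmat h sc E1 E2 F1 F2 K in
     N 3 2 - fps_X * N 3 1 * fps_inv2 (N 1 1) * N 1 2)"
definition N2_33 where
  "N2_33 h sc E1 E2 F1 F2 K = (let N = Nmat h sc E1 E2 F1 F2 K in
     N 3 3 - fps_X * N 3 1 * fps_inv2 (N 1 1) * N 1 3)"
definition N3_33 where
  "N3_33 h sc E1 E2 F1 F2 K =
     N2_33 h sc E1 E2 F1 F2 K - fps_X * N2_32 h sc E1 E2 F1 F2 K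
       * fps_inv2 (N2_22 h sc E1 E2 F1 F2 K) * N2_23 h sc E1 E2 F1 F2 K"

end

theory Submission
  imports Defs
begin
unbundle fps_syntax

definition PL :: "'a::ring_1 list \<Rightarrow> 'a fps" where
  "PL xs = Abs_fps (\<lambda>n. if n < length xs then xs ! n else 0)"

fun zadd :: "'a::ring_1 list \<Rightarrow> 'a list \<Rightarrow> 'a list" where
  "zadd [] ys = ys"
| "zadd xs [] = xs"
| "zadd (x#xs) (y#ys) = (x+y) # zadd xs ys"

fun conv :: "'a::ring_1 list \<Rightarrow> 'a list \<Rightarrow> 'a list" where
  "conv [] ys = []"
| "conv (x#xs) ys = zadd (map (\<lambda>y. x*y) ys) (0 # conv xs ys)"

lemma PL_Nil[simp]: "PL [] = 0"
  by (simp add: PL_def fps_eq_iff)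

lemma PL_Cons: "PL (x#xs) = fps_const x + fps_X * PL xs"
  by (auto simp: PL_def fps_eq_iff nth_Cons split: nat.splits)

lemma PL_add: "PL xs + PL ys = PL (zadd xs ys)"
proof (induction xs ys rule: zadd.induct)
  case (1 ys) then show ?case by simp
next
  case (2 x xs) then show ?case by simp
next
  case (3 x xs y ys)
  have "PL (x#xs) + PL (y#ys) = fps_const (x+y) + fps_X * (PL xs + PL ys)"
    by (simp add: PL_Cons algebra_simps)
  also have "\<dots> = PL ((x+y) # zadd xs ys)" using 3 by (simp add: PL_Cons)
  finally show ?case by simp
qed

lemma PL_uminus: "- PL xs = PL (map uminus xs)"
  by (simp add: PL_def fps_eq_iff)

lemma PL_diff: "PL xs - PL ys = PL (zadd xs (map uminus ys))"
  by (metis PL_add PL_uminus diff_conv_add_uminus)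

lemma PL_constL: "fps_const c * PL xs = PL (map (\<lambda>y. c*y) xs)"
  by (simp add: PL_def fps_eq_iff)

lemma PL_X: "fps_X * PL xs = PL (0 # xs)"
  by (simp add: PL_Cons)

lemma PL_mult: "PL xs * PL ys = PL (conv xs ys)"
proof (induction xs)
  case Nil then show ?case by simp
next
  case (Cons x xs)
  have "PL (x#xs) * PL ys = fps_const x * PL ys + fps_X * (PL xs * PL ys)"
    by (simp add: PL_Cons algebra_simps)
  also have "\<dots> = PL (conv (x#xs) ys)" using Cons
    by (simp add: PL_constL PL_X PL_add)
  finally show ?case .
qed

lemma PL_one: "1 = PL [1]" by (simp add: PL_def fps_eq_iff)
lemma PL_fpsX: "fps_X = PL [0,1]" by (simp add: PL_def fps_eq_iff fps_X_def nth_Cons split: nat.splits)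
lemma PL_const: "fps_const c = PL [c]" by (simp add: PL_def fps_eq_iff)

lemma PL_snoc0: "PL (xs @ [0]) = PL xs"
  by (auto simp: PL_def fps_eq_iff nth_append)

lemma inv2_unique:
  fixes f g :: "'a::ring_1 fps"
  assumes "f * g = 1" "g * f = 1"
  shows "fps_inv2 f = g"
  unfolding fps_inv2_def
proof (rule the_equality)
  show "f * g = 1 \<and> g * f = 1" using assms by blast
next
  fix g' assume a: "f * g' = 1 \<and> g' * f = 1"
  have "g' = g' * (f * g)" using assms(1) by simp
  also have "\<dots> = (g' * f) * g" by (simp only: mult.assoc)
  also have "\<dots> = g" using a by simp
  finally show "g' = g" .
qed

lemma inv2_props:
  fixes f :: "'a::ring_1 fps"
  assumes "fps_nth f 0 = 1"
  shows "f * fps_inv2 f = 1" "fps_inv2 f * f = 1"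
proof -
  have r: "f * fps_right_inverse f 1 = 1" by (rule fps_right_inverse) (simp add: assms)
  have l: "fps_right_inverse f 1 * f = 1" by (rule fps_left_inverse'[of 1]) (simp_all add: assms)
  have "fps_inv2 f = fps_right_inverse f 1" by (rule inv2_unique[OF r l])
  then show "f * fps_inv2 f = 1" "fps_inv2 f * f = 1" using r l by simp_all
qed



fun lcf :: "(complex \<Rightarrow> 'a::ring_1) \<Rightarrow> complex list \<Rightarrow> 'a list \<Rightarrow> 'a" where
  "lcf sc (c#cs) (m#ms) = sc c * m + lcf sc cs ms"
| "lcf sc _ _ = 0"

declare lcf.simps[simp del]

lemma qpow_add: "qpow h x * qpow h y = qpow h (x + y)"
  by (simp add: qpow_def distrib_left exp_add)
lemma qpow_0[simp]: "qpow h 0 = 1" by (simp add: qpow_def)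
lemma qpow_1[simp]: "qpow h 1 = qq h" by (simp add: qpow_def qq_def)
lemma qpow_numeral[simp]: "qpow h (numeral n) = qq h ^ numeral n"
  by (simp add: qpow_def qq_def exp_of_nat_mult[symmetric] mult.commute)
lemma qpow_neg: "qpow h (- x) = inverse (qpow h x)"
  by (simp add: qpow_def exp_minus)
lemma qpow_neg_numeral[simp]: "qpow h (- numeral n) = inverse (qq h ^ numeral n)"
  by (simp add: qpow_neg)
lemma qpow_neg_one[simp]: "qpow h (- 1) = inverse (qq h)"
  by (simp add: qpow_neg)
lemma qq_nz[simp]: "qq h \<noteq> 0" by (simp add: qq_def)

locale UQ =
  fixes h :: complex and sc :: "complex \<Rightarrow> 'a::ring_1" and E1 E2 F1 F2 :: 'a
    and K :: "complex \<Rightarrow> complex \<Rightarrow> complex \<Rightarrow> 'a"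
  assumes q2: "(qq h)^2 \<noteq> 1" and alg: "is_C_algebra sc" and rel: "Uq_gl3_rel h sc E1 E2 F1 F2 K"
begin

abbreviation "q \<equiv> qq h"
abbreviation "e3 \<equiv> E3 h sc E1 E2"
abbreviation "f3 \<equiv> F3 h sc F1 F2"

lemma sc_1: "sc 1 = 1" using alg unfolding is_C_algebra_def by blast
lemma sc_add: "sc (x + y) = sc x + sc y" using alg unfolding is_C_algebra_def by blast
lemma sc_mult: "sc (x * y) = sc x * sc y" using alg unfolding is_C_algebra_def by blast
lemma sc_comm: "sc z * a = a * sc z" using alg unfolding is_C_algebra_def by blast
lemma sc_0: "sc 0 = 0"
proof -
  have "sc 0 + sc 0 = sc 0 + 0" using sc_add[of 0 0] by simp
  then show ?thesis by (rule add_left_imp_eq)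
qed
lemma sc_minus: "sc (- x) = - sc x"
proof -
  have "sc x + sc (- x) = 0" using sc_add[of x "-x"] sc_0 by simp
  then show ?thesis by (rule minus_unique[symmetric])
qed
lemma sc_diff: "sc (x - y) = sc x - sc y" using sc_add[of x "-y"] sc_minus by simp

lemma kap_nz: "kap h \<noteq> 0"
proof
  assume "kap h = 0"
  then have "q = inverse q" by (simp add: kap_def)
  then have "q * q = 1" by (metis qq_nz right_inverse)
  then show False using q2 by (simp add: power2_eq_square)
qed

lemma K0: "K 0 0 0 = 1" using rel unfolding Uq_gl3_rel_def by blast
lemma Kmult: "K a1 a2 a3 * K b1 b2 b3 = K (a1 + b1) (a2 + b2) (a3 + b3)"
proof -
  have "\<forall>a1 a2 a3 b1 b2 b3. K (a1 + b1) (a2 + b2) (a3 + b3) = K a1 a2 a3 * K b1 b2 b3"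
    using rel unfolding Uq_gl3_rel_def by blast
  then show ?thesis by metis
qed
lemma Kinv: "K (-a1) (-a2) (-a3) * K a1 a2 a3 = 1"
  by (simp add: Kmult K0)

lemma conj_comm:
  assumes "K a1 a2 a3 * X * K (-a1) (-a2) (-a3) = sc c * X"
  shows "K a1 a2 a3 * X = sc c * (X * K a1 a2 a3)"
proof -
  have "K a1 a2 a3 * X = K a1 a2 a3 * X * (K (-a1) (-a2) (-a3) * K a1 a2 a3)" by (simp only: Kinv mult_1_right)
  also have "\<dots> = (K a1 a2 a3 * X * K (-a1) (-a2) (-a3)) * K a1 a2 a3" by (simp only: mult.assoc)
  also have "\<dots> = sc c * X * K a1 a2 a3" by (simp only: assms)
  finally show ?thesis by (simp only: mult.assoc)
qed

lemma R_KE1: "\<forall>a1 a2 a3. K a1 a2 a3 * E1 * K (-a1) (-a2) (-a3) = sc (qpow h (a1 - a2)) * E1"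
  using rel unfolding Uq_gl3_rel_def by (elim conjE) assumption
lemma R_KE2: "\<forall>a1 a2 a3. K a1 a2 a3 * E2 * K (-a1) (-a2) (-a3) = sc (qpow h (a2 - a3)) * E2"
  using rel unfolding Uq_gl3_rel_def by (elim conjE) assumption
lemma R_KF1: "\<forall>a1 a2 a3. K a1 a2 a3 * F1 * K (-a1) (-a2) (-a3) = sc (qpow h (-(a1 - a2))) * F1"
  using rel unfolding Uq_gl3_rel_def by (elim conjE) assumption
lemma R_KF2: "\<forall>a1 a2 a3. K a1 a2 a3 * F2 * K (-a1) (-a2) (-a3) = sc (qpow h (-(a2 - a3))) * F2"
  using rel unfolding Uq_gl3_rel_def by (elim conjE) assumption
lemma KE1: "K a1 a2 a3 * E1 = sc (qpow h (a1 - a2)) * (E1 * K a1 a2 a3)"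
  by (rule conj_comm) (rule R_KE1[rule_format])
lemma KE2: "K a1 a2 a3 * E2 = sc (qpow h (a2 - a3)) * (E2 * K a1 a2 a3)"
  by (rule conj_comm) (rule R_KE2[rule_format])
lemma KF1: "K a1 a2 a3 * F1 = sc (qpow h (-(a1 - a2))) * (F1 * K a1 a2 a3)"
  by (rule conj_comm) (rule R_KF1[rule_format])
lemma KF2: "K a1 a2 a3 * F2 = sc (qpow h (-(a2 - a3))) * (F2 * K a1 a2 a3)"
  by (rule conj_comm) (rule R_KF2[rule_format])

lemma R_EF11: "E1 * F1 - F1 * E1 = sc (inverse (kap h)) * (K 1 (-1) 0 - K (-1) 1 0)"
  using rel unfolding Uq_gl3_rel_def by (elim conjE) assumption
lemma R_EF22: "E2 * F2 - F2 * E2 = sc (inverse (kap h)) * (K 0 1 (-1) - K 0 (-1) 1)"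
  using rel unfolding Uq_gl3_rel_def by (elim conjE) assumption
lemma R_EF12: "E1 * F2 - F2 * E1 = 0"
  using rel unfolding Uq_gl3_rel_def by (elim conjE) assumption
lemma R_EF21: "E2 * F1 - F1 * E2 = 0"
  using rel unfolding Uq_gl3_rel_def by (elim conjE) assumption
lemma R_SE1: "E1 * E1 * E2 - sc (qnum h 2) * (E1 * E2 * E1) + E2 * E1 * E1 = 0"
  using rel unfolding Uq_gl3_rel_def by (elim conjE) assumption
lemma R_SE2: "E2 * E2 * E1 - sc (qnum h 2) * (E2 * E1 * E2) + E1 * E2 * E2 = 0"
  using rel unfolding Uq_gl3_rel_def by (elim conjE) assumption
lemma R_SF1: "F1 * F1 * F2 - sc (qnum h 2) * (F1 * F2 * F1) + F2 * F1 * F1 = 0"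
  using rel unfolding Uq_gl3_rel_def by (elim conjE) assumption
lemma R_SF2: "F2 * F2 * F1 - sc (qnum h 2) * (F2 * F1 * F2) + F1 * F2 * F2 = 0"
  using rel unfolding Uq_gl3_rel_def by (elim conjE) assumption

lemma swap_eq: fixes x y d :: 'a shows "x * y - y * x = d \<Longrightarrow> x * y = y * x + d"
proof -
  assume a: "x * y - y * x = d"
  have "x * y = (x * y - y * x) + y * x" by (simp only: diff_add_cancel)
  then show ?thesis using a by (simp only: add.commute)
qed
lemma EF11: "E1 * F1 = F1 * E1 + (sc (inverse (kap h)) * K 1 (-1) 0 - sc (inverse (kap h)) * K (-1) 1 0)"
  using swap_eq[OF R_EF11] by (simp only: right_diff_distrib)
lemma EF22: "E2 * F2 = F2 * E2 + (sc (inverse (kap h)) * K 0 1 (-1) - sc (inverse (kap h)) * K 0 (-1) 1)"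
  using swap_eq[OF R_EF22] by (simp only: right_diff_distrib)
lemma EF12: "E1 * F2 = F2 * E1" using swap_eq[OF R_EF12] by (simp only: add_0_right)
lemma EF21: "E2 * F1 = F1 * E2" using swap_eq[OF R_EF21] by (simp only: add_0_right)

lemma tl: fixes x y z w :: 'a shows "x * y = z \<Longrightarrow> x * (y * w) = z * w" by (simp add: mult.assoc[symmetric])

lemma scL: fixes x y :: 'a shows "x * (sc c * y) = sc c * (x * y)" by (metis mult.assoc sc_comm)
lemma scR: fixes x :: 'a shows "x * sc c = sc c * x" by (simp add: sc_comm)
lemma scsc: fixes x :: 'a shows "sc a * (sc b * x) = sc (a * b) * x" by (simp add: sc_mult mult.assoc)
lemma scsc': "sc a * sc b = sc (a * b)" by (simp add: sc_mult)
lemma scneg: fixes x :: 'a shows "- (sc a * x) = sc (- a) * x" by (simp add: sc_minus)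

lemmas KEF_base = KE1 KE2 KF1 KF2 KE1[THEN tl] KE2[THEN tl] KF1[THEN tl] KF2[THEN tl]
  Kmult Kmult[THEN tl] K0
lemmas EF_base = EF11 EF11[THEN tl] EF22 EF22[THEN tl] EF12 EF12[THEN tl] EF21 EF21[THEN tl]
lemmas sc_base = scL[of E1] scL[of E2] scL[of F1] scL[of F2] scL[of "K a b c" for a b c]
  scR[of E1] scR[of E2] scR[of F1] scR[of F2] scR[of "K a b c" for a b c] scsc scsc'

lemmas nrm = mult.assoc distrib_left distrib_right left_diff_distrib right_diff_distrib

lemma lc_add: "lcf sc cs ms + lcf sc ds ms = lcf sc (zadd cs ds) ms"
proof (induction cs ds arbitrary: ms rule: zadd.induct)
  case (1 ys) then show ?case by (simp add: lcf.simps)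
next
  case (2 x xs) then show ?case by (simp add: lcf.simps)
next
  case (3 x xs y ys) then show ?case
    by (cases ms) (simp_all add: lcf.simps sc_add algebra_simps)
qed

lemma lc_neg: "- lcf sc cs ms = lcf sc (map uminus cs) ms"
proof (induction cs arbitrary: ms)
  case Nil then show ?case by (simp add: lcf.simps)
next
  case (Cons c cs) then show ?case
    by (cases ms) (simp_all add: lcf.simps sc_minus algebra_simps)
qed

lemma lc_diff: "lcf sc cs ms - lcf sc ds ms = lcf sc (zadd cs (map uminus ds)) ms"
  by (metis lc_add lc_neg diff_conv_add_uminus)

lemma lc_cong: "cs = ds \<Longrightarrow> lcf sc cs ms = lcf sc ds ms" by simp

lemma lc_zero: "list_all (\<lambda>c. c = 0) cs \<Longrightarrow> lcf sc cs ms = 0"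
proof (induction cs arbitrary: ms)
  case Nil then show ?case by (simp add: lcf.simps)
next
  case (Cons c cs) then show ?case
    by (cases ms) (simp_all add: lcf.simps sc_0)
qed

lemma qsq: "q * q \<noteq> 1" using q2 by (simp add: power2_eq_square)
lemma qsq': "q * q - 1 \<noteq> 0" using qsq by simp
lemma qsq'': "1 - q * q \<noteq> 0" using qsq by simp

lemma sc1I: "sc 1 * A = sc 1 * B \<Longrightarrow> A = B" by (simp add: sc_1)

lemma qnum2: "qnum h 2 = q + inverse q"
proof -
  have "qnum h 2 = (q^2 - inverse (q^2)) / (q - inverse q)"
    by (simp add: qnum_def kap_def)
  also have "\<dots> = q + inverse q" using kap_nz
    by (simp add: kap_def field_simps power2_eq_square)
  finally show ?thesis .
qed

lemma lin3: fixes a b c :: 'a shows "a - b + c = 0 \<Longrightarrow> c = b - a"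
proof -
  assume h: "a - b + c = 0"
  have "c = (a - b + c) - (a - b)" by (simp only: add_diff_cancel_left')
  also have "\<dots> = b - a" using h by simp
  finally show ?thesis .
qed
lemma lin3': fixes a b c :: 'a shows "a - b + c = 0 \<Longrightarrow> a = b - c"
proof -
  assume h: "a - b + c = 0"
  have "a = (a - b + c) + b - c" by (simp add: algebra_simps)
  also have "\<dots> = b - c" using h by simp
  finally show ?thesis .
qed

lemma SF1': "F2 * (F1 * F1) = sc (q + inverse q) * (F1 * (F2 * F1)) - F1 * (F1 * F2)"
  using lin3[OF R_SF1] by (simp add: qnum2 mult.assoc)
lemma SF2': "F2 * (F2 * F1) = sc (q + inverse q) * (F2 * (F1 * F2)) - F1 * (F2 * F2)"
  using lin3'[OF R_SF2] by (simp add: qnum2 mult.assoc)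
lemma SE1': "E2 * (E1 * E1) = sc (q + inverse q) * (E1 * (E2 * E1)) - E1 * (E1 * E2)"
  using lin3[OF R_SE1] by (simp add: qnum2 mult.assoc)
lemma SE2': "E2 * (E2 * E1) = sc (q + inverse q) * (E2 * (E1 * E2)) - E1 * (E2 * E2)"
  using lin3'[OF R_SE2] by (simp add: qnum2 mult.assoc)

end

context UQ begin

lemma tl3: fixes x y z r w :: 'a shows "x * (y * z) = r \<Longrightarrow> x * (y * (z * w)) = r * w"
  by (simp add: mult.assoc[symmetric])

lemmas sc_e3 = scL[of e3] scR[of e3]
lemmas sc_f3 = scL[of f3] scR[of f3]

lemma qpow_tri: "qpow h (a - b) * qpow h (b - c) = qpow h (a - c)"
  by (simp add: qpow_add)
lemma qpow_tri': "qpow h (b - c) * qpow h (a - b) = qpow h (a - c)"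
  by (simp add: qpow_add)
lemma qpow_tri2: "qpow h (- (a - b)) * qpow h (- (b - c)) = qpow h (- (a - c))"
  by (simp add: qpow_add)
lemma qpow_tri2': "qpow h (- (b - c)) * qpow h (- (a - b)) = qpow h (- (a - c))"
  by (simp add: qpow_add)

lemma Ke3: "K a b c * e3 = sc (qpow h (a - c)) * (e3 * K a b c)"
proof -
  define B where "B = [E1 * (E2 * K a b c), E2 * (E1 * K a b c)]"
  have cv: "\<And>d. sc d * (E1 * (E2 * K a b c)) = lcf sc [d,0] B"
    "\<And>d. sc d * (E2 * (E1 * K a b c)) = lcf sc [0,d] B"
    unfolding B_def by (simp_all add: lcf.simps sc_0)
  show ?thesis
    unfolding E3_def
    by (rule sc1I, simp add: nrm sc_base KEF_base, simp only: cv lc_add lc_diff lc_neg zadd.simps list.map,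
      rule lc_cong, simp add: qpow_def mult_exp_exp algebra_simps)
qed

lemma Kf3: "K a b c * f3 = sc (qpow h (- (a - c))) * (f3 * K a b c)"
proof -
  define B where "B = [F2 * (F1 * K a b c), F1 * (F2 * K a b c)]"
  have cv: "\<And>d. sc d * (F2 * (F1 * K a b c)) = lcf sc [d,0] B"
    "\<And>d. sc d * (F1 * (F2 * K a b c)) = lcf sc [0,d] B"
    unfolding B_def by (simp_all add: lcf.simps sc_0)
  show ?thesis
    unfolding F3_def
    by (rule sc1I, simp add: nrm sc_base KEF_base, simp only: cv lc_add lc_diff lc_neg zadd.simps list.map,
      rule lc_cong, simp add: qpow_def mult_exp_exp algebra_simps)
qed

lemma R1: "E1 * f3 = f3 * E1 + sc (- q) * (F2 * K 1 (-1) 0)"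
proof -
  define B where "B = [F2 * (K (-1) 1 0), F2 * (K 1 (-1) 0), F1 * (F2 * (E1)), F2 * (F1 * (E1))]"
  have cv:
    "\<And>c. sc c * (F2 * (K (-1) 1 0)) = lcf sc [c,0,0,0] B"
    "\<And>c. sc c * (F2 * (K 1 (-1) 0)) = lcf sc [0,c,0,0] B"
    "\<And>c. sc c * (F1 * (F2 * (E1))) = lcf sc [0,0,c,0] B"
    "\<And>c. sc c * (F2 * (F1 * (E1))) = lcf sc [0,0,0,c] B"
    unfolding B_def by (simp_all add: lcf.simps sc_0)
  show ?thesis
    unfolding F3_def
    by (rule sc1I, simp add: nrm sc_base KEF_base EF_base , ((simp only: cv lc_add lc_diff lc_neg zadd.simps list.map),
      (rule lc_cong | rule lc_zero | rule lc_zero[symmetric]),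
      (simp only: list.inject list.pred_inject list.map)?,
      (intro conjI TrueI)?,
      (simp_all add: field_simps kap_nz)?,
      (simp_all add: kap_def field_simps)?,
      (simp_all add: algebra_simps)?)?)
qed

lemma R2: "E2 * f3 = f3 * E2 + F1 * K 0 (-1) 1"
proof -
  define B where "B = [F1 * (K 0 (-1) 1), F1 * (K 0 1 (-1)), F1 * (F2 * (E2)), F2 * (F1 * (E2))]"
  have cv:
    "\<And>c. sc c * (F1 * (K 0 (-1) 1)) = lcf sc [c,0,0,0] B"
    "\<And>c. sc c * (F1 * (K 0 1 (-1))) = lcf sc [0,c,0,0] B"
    "\<And>c. sc c * (F1 * (F2 * (E2))) = lcf sc [0,0,c,0] B"
    "\<And>c. sc c * (F2 * (F1 * (E2))) = lcf sc [0,0,0,c] B"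
    unfolding B_def by (simp_all add: lcf.simps sc_0)
  show ?thesis
    unfolding F3_def
    by (rule sc1I, simp add: nrm sc_base KEF_base EF_base , ((simp only: cv lc_add lc_diff lc_neg zadd.simps list.map),
      (rule lc_cong | rule lc_zero | rule lc_zero[symmetric]),
      (simp only: list.inject list.pred_inject list.map)?,
      (intro conjI TrueI)?,
      (simp_all add: field_simps kap_nz)?,
      (simp_all add: kap_def field_simps)?,
      (simp_all add: algebra_simps)?)?)
qed

lemma R3: "e3 * F1 = F1 * e3 + sc (-1) * (E2 * K (-1) 1 0)"
proof -
  define B where "B = [E2 * (K (-1) 1 0), E2 * (K 1 (-1) 0), F1 * (E1 * (E2)), F1 * (E2 * (E1))]"
  have cv:
    "\<And>c. sc c * (E2 * (K (-1) 1 0)) = lcf sc [c,0,0,0] B"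
    "\<And>c. sc c * (E2 * (K 1 (-1) 0)) = lcf sc [0,c,0,0] B"
    "\<And>c. sc c * (F1 * (E1 * (E2))) = lcf sc [0,0,c,0] B"
    "\<And>c. sc c * (F1 * (E2 * (E1))) = lcf sc [0,0,0,c] B"
    unfolding B_def by (simp_all add: lcf.simps sc_0)
  show ?thesis
    unfolding E3_def
    by (rule sc1I, simp add: nrm sc_base KEF_base EF_base , ((simp only: cv lc_add lc_diff lc_neg zadd.simps list.map),
      (rule lc_cong | rule lc_zero | rule lc_zero[symmetric]),
      (simp only: list.inject list.pred_inject list.map)?,
      (intro conjI TrueI)?,
      (simp_all add: field_simps kap_nz)?,
      (simp_all add: kap_def field_simps)?,
      (simp_all add: algebra_simps)?)?)
qed

lemma R4: "e3 * F2 = F2 * e3 + sc (inverse q) * (E1 * K 0 1 (-1))"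
proof -
  define B where "B = [E1 * (K 0 (-1) 1), E1 * (K 0 1 (-1)), F2 * (E1 * (E2)), F2 * (E2 * (E1))]"
  have cv:
    "\<And>c. sc c * (E1 * (K 0 (-1) 1)) = lcf sc [c,0,0,0] B"
    "\<And>c. sc c * (E1 * (K 0 1 (-1))) = lcf sc [0,c,0,0] B"
    "\<And>c. sc c * (F2 * (E1 * (E2))) = lcf sc [0,0,c,0] B"
    "\<And>c. sc c * (F2 * (E2 * (E1))) = lcf sc [0,0,0,c] B"
    unfolding B_def by (simp_all add: lcf.simps sc_0)
  show ?thesis
    unfolding E3_def
    by (rule sc1I, simp add: nrm sc_base KEF_base EF_base , ((simp only: cv lc_add lc_diff lc_neg zadd.simps list.map),
      (rule lc_cong | rule lc_zero | rule lc_zero[symmetric]),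
      (simp only: list.inject list.pred_inject list.map)?,
      (intro conjI TrueI)?,
      (simp_all add: field_simps kap_nz)?,
      (simp_all add: kap_def field_simps)?,
      (simp_all add: algebra_simps)?)?)
qed

lemma R5: "e3 * f3 = f3 * e3 + sc (inverse (kap h)) * K 1 0 (-1) - sc (inverse (kap h)) * K (-1) 0 1"
proof -
  define B where "B = [K (-1) 0 1, K (-1) 2 (-1), K 1 0 (-1), F1 * (E1 * (K 0 1 (-1))), F1 * (F2 * (e3)), F2 * (E2 * (K (-1) 1 0)), F2 * (F1 * (e3))]"
  have cv:
    "\<And>c. sc c * (K (-1) 0 1) = lcf sc [c,0,0,0,0,0,0] B"
    "\<And>c. sc c * (K (-1) 2 (-1)) = lcf sc [0,c,0,0,0,0,0] B"
    "\<And>c. sc c * (K 1 0 (-1)) = lcf sc [0,0,c,0,0,0,0] B"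
    "\<And>c. sc c * (F1 * (E1 * (K 0 1 (-1)))) = lcf sc [0,0,0,c,0,0,0] B"
    "\<And>c. sc c * (F1 * (F2 * (e3))) = lcf sc [0,0,0,0,c,0,0] B"
    "\<And>c. sc c * (F2 * (E2 * (K (-1) 1 0))) = lcf sc [0,0,0,0,0,c,0] B"
    "\<And>c. sc c * (F2 * (F1 * (e3))) = lcf sc [0,0,0,0,0,0,c] B"
    unfolding B_def by (simp_all add: lcf.simps sc_0)
  show ?thesis
    unfolding F3_def
    by (rule sc1I, simp add: nrm sc_base KEF_base EF_base R3 R3[THEN tl] R4 R4[THEN tl] sc_e3, ((simp only: cv lc_add lc_diff lc_neg zadd.simps list.map),
      (rule lc_cong | rule lc_zero | rule lc_zero[symmetric]),
      (simp only: list.inject list.pred_inject list.map)?,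
      (intro conjI TrueI)?,
      (simp_all add: field_simps kap_nz)?,
      (simp_all add: kap_def field_simps)?,
      (simp_all add: algebra_simps)?)?)
qed

lemma R6: "F2 * F1 = f3 + sc q * (F1 * F2)"
proof -
  define B where "B = [F1 * (F2), F2 * (F1)]"
  have cv:
    "\<And>c. sc c * (F1 * (F2)) = lcf sc [c,0] B"
    "\<And>c. sc c * (F2 * (F1)) = lcf sc [0,c] B"
    unfolding B_def by (simp_all add: lcf.simps sc_0)
  show ?thesis
    unfolding F3_def
    by (rule sc1I, simp add: nrm sc_base KEF_base EF_base , ((simp only: cv lc_add lc_diff lc_neg zadd.simps list.map),
      (rule lc_cong | rule lc_zero | rule lc_zero[symmetric]),
      (simp only: list.inject list.pred_inject list.map)?,
      (intro conjI TrueI)?,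
      (simp_all add: field_simps kap_nz)?,
      (simp_all add: kap_def field_simps)?,
      (simp_all add: algebra_simps)?)?)
qed

lemma R7: "f3 * F1 = sc (inverse q) * (F1 * f3)"
proof -
  define B where "B = [F1 * (F1 * (F2)), F1 * (F2 * (F1))]"
  have cv:
    "\<And>c. sc c * (F1 * (F1 * (F2))) = lcf sc [c,0] B"
    "\<And>c. sc c * (F1 * (F2 * (F1))) = lcf sc [0,c] B"
    unfolding B_def by (simp_all add: lcf.simps sc_0)
  show ?thesis
    unfolding F3_def
    by (rule sc1I, simp add: nrm sc_base KEF_base EF_base SF1' SF1'[THEN tl3], ((simp only: cv lc_add lc_diff lc_neg zadd.simps list.map),
      (rule lc_cong | rule lc_zero | rule lc_zero[symmetric]),
      (simp only: list.inject list.pred_inject list.map)?,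
      (intro conjI TrueI)?,
      (simp_all add: field_simps kap_nz)?,
      (simp_all add: kap_def field_simps)?,
      (simp_all add: algebra_simps)?)?)
qed

lemma R8: "F2 * f3 = sc (inverse q) * (f3 * F2)"
proof -
  define B where "B = [F1 * (F2 * (F2)), F2 * (F1 * (F2))]"
  have cv:
    "\<And>c. sc c * (F1 * (F2 * (F2))) = lcf sc [c,0] B"
    "\<And>c. sc c * (F2 * (F1 * (F2))) = lcf sc [0,c] B"
    unfolding B_def by (simp_all add: lcf.simps sc_0)
  show ?thesis
    unfolding F3_def
    by (rule sc1I, simp add: nrm sc_base KEF_base EF_base SF2' SF2'[THEN tl3], ((simp only: cv lc_add lc_diff lc_neg zadd.simps list.map),
      (rule lc_cong | rule lc_zero | rule lc_zero[symmetric]),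
      (simp only: list.inject list.pred_inject list.map)?,
      (intro conjI TrueI)?,
      (simp_all add: field_simps kap_nz)?,
      (simp_all add: kap_def field_simps)?,
      (simp_all add: algebra_simps)?)?)
qed

lemma R9: "E2 * E1 = sc q * (E1 * E2) - sc q * e3"
proof -
  define B where "B = [E1 * (E2), E2 * (E1)]"
  have cv:
    "\<And>c. sc c * (E1 * (E2)) = lcf sc [c,0] B"
    "\<And>c. sc c * (E2 * (E1)) = lcf sc [0,c] B"
    unfolding B_def by (simp_all add: lcf.simps sc_0)
  show ?thesis
    unfolding E3_def
    by (rule sc1I, simp add: nrm sc_base KEF_base EF_base , ((simp only: cv lc_add lc_diff lc_neg zadd.simps list.map),
      (rule lc_cong | rule lc_zero | rule lc_zero[symmetric]),
      (simp only: list.inject list.pred_inject list.map)?,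
      (intro conjI TrueI)?,
      (simp_all add: field_simps kap_nz)?,
      (simp_all add: kap_def field_simps)?,
      (simp_all add: algebra_simps)?)?)
qed

lemma R10: "e3 * E1 = sc (inverse q) * (E1 * e3)"
proof -
  define B where "B = [E1 * (E1 * (E2)), E1 * (E2 * (E1))]"
  have cv:
    "\<And>c. sc c * (E1 * (E1 * (E2))) = lcf sc [c,0] B"
    "\<And>c. sc c * (E1 * (E2 * (E1))) = lcf sc [0,c] B"
    unfolding B_def by (simp_all add: lcf.simps sc_0)
  show ?thesis
    unfolding E3_def
    by (rule sc1I, simp add: nrm sc_base KEF_base EF_base SE1' SE1'[THEN tl3], ((simp only: cv lc_add lc_diff lc_neg zadd.simps list.map),
      (rule lc_cong | rule lc_zero | rule lc_zero[symmetric]),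
      (simp only: list.inject list.pred_inject list.map)?,
      (intro conjI TrueI)?,
      (simp_all add: field_simps kap_nz)?,
      (simp_all add: kap_def field_simps)?,
      (simp_all add: algebra_simps)?)?)
qed

lemma R11: "E2 * e3 = sc (inverse q) * (e3 * E2)"
proof -
  define B where "B = [E1 * (E2 * (E2)), E2 * (E1 * (E2))]"
  have cv:
    "\<And>c. sc c * (E1 * (E2 * (E2))) = lcf sc [c,0] B"
    "\<And>c. sc c * (E2 * (E1 * (E2))) = lcf sc [0,c] B"
    unfolding B_def by (simp_all add: lcf.simps sc_0)
  show ?thesis
    unfolding E3_def
    by (rule sc1I, simp add: nrm sc_base KEF_base EF_base SE2' SE2'[THEN tl3], ((simp only: cv lc_add lc_diff lc_neg zadd.simps list.map),
      (rule lc_cong | rule lc_zero | rule lc_zero[symmetric]),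
      (simp only: list.inject list.pred_inject list.map)?,
      (intro conjI TrueI)?,
      (simp_all add: field_simps kap_nz)?,
      (simp_all add: kap_def field_simps)?,
      (simp_all add: algebra_simps)?)?)
qed

lemmas Rall = R1 R2 R3 R4 R5 R6 R7 R8 R9 R10 R11
  R1[THEN tl] R2[THEN tl] R3[THEN tl] R4[THEN tl] R5[THEN tl] R6[THEN tl] R7[THEN tl]
  R8[THEN tl] R9[THEN tl] R10[THEN tl] R11[THEN tl]
  Ke3 Kf3 Ke3[THEN tl] Kf3[THEN tl] sc_e3 sc_f3

end


fun slist :: "(complex \<Rightarrow> 'a::ring_1) \<Rightarrow> complex \<Rightarrow> nat \<Rightarrow> 'a list \<Rightarrow> 'a list" where
  "slist sc c i [] = []"
| "slist sc c i (x#xs) = (sc (c ^ i) * x) # slist sc c (Suc i) xs"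

lemma PL_cong: "xs = ys \<Longrightarrow> PL xs = PL ys" by simp

lemma PL_constR: "PL xs * fps_const c = PL (map (\<lambda>y. y * c) xs)"
  by (simp add: PL_def fps_eq_iff fps_const_mult_right)

context UQ begin

abbreviation "S c \<equiv> fps_subst_scale sc c"

lemma slist_nth: "n < length xs \<Longrightarrow> slist sc c i xs ! n = sc (c ^ (i + n)) * xs ! n"
proof (induction xs arbitrary: i n)
  case Nil then show ?case by simp
next
  case (Cons x xs) then show ?case by (cases n) simp_all
qed

lemma slist_len[simp]: "length (slist sc c i xs) = length xs"
  by (induction xs arbitrary: i) simp_all

lemma S_PL: "S c (PL xs) = PL (slist sc c 0 xs)"
  by (simp add: fps_subst_scale_def PL_def fps_eq_iff slist_nth sc_0)

lemma S_add: "S c (f + g) = S c f + S c g"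
  by (simp add: fps_subst_scale_def fps_eq_iff distrib_left)
lemma S_diff: "S c (f - g) = S c f - S c g"
  by (simp add: fps_subst_scale_def fps_eq_iff right_diff_distrib)
lemma S_one: "S c 1 = 1"
  by (simp add: fps_subst_scale_def fps_eq_iff sc_1 sc_0)
lemma S_mult: "S c (f * g) = S c f * S c g"
proof (rule fps_ext)
  fix n
  have "(S c f * S c g) $ n = (\<Sum>i=0..n. (sc (c^i) * f$i) * (sc (c^(n-i)) * g$(n-i)))"
    by (simp add: fps_subst_scale_def fps_mult_nth)
  also have "\<dots> = (\<Sum>i=0..n. sc (c^n) * (f$i * g$(n-i)))"
  proof (rule sum.cong)
    fix i assume "i \<in> {0..n}"
    then have "c^i * c^(n-i) = c^n" by (simp add: power_add[symmetric])
    then show "(sc (c^i) * f$i) * (sc (c^(n-i)) * g$(n-i)) = sc (c^n) * (f$i * g$(n-i))"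
      by (metis (no_types, lifting) mult.assoc sc_comm sc_mult)
  qed simp
  also have "\<dots> = S c (f * g) $ n"
    by (simp add: fps_subst_scale_def fps_mult_nth sum_distrib_left)
  finally show "S c (f * g) $ n = (S c f * S c g) $ n" by simp
qed

lemma S_inv:
  assumes "fps_nth f 0 = 1"
  shows "S c (fps_inv2 f) = fps_inv2 (S c f)"
proof -
  have "S c f * S c (fps_inv2 f) = 1" by (simp add: S_mult[symmetric] inv2_props(1)[OF assms] S_one)
  moreover have "S c (fps_inv2 f) * S c f = 1" by (simp add: S_mult[symmetric] inv2_props(2)[OF assms] S_one)
  ultimately show ?thesis by (simp add: inv2_unique)
qed

lemma S_nth0: "fps_nth (S c f) 0 = fps_nth f 0"
  by (simp add: fps_subst_scale_def sc_1)

lemma S_X: "S c fps_X = PL [0, sc c]"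
  by (simp add: fps_subst_scale_def PL_def fps_eq_iff fps_X_def sc_0 nth_Cons split: nat.splits)

lemma const_sc_comm: "fps_const (sc c) * f = f * fps_const (sc c)"
  by (simp add: fps_eq_iff fps_const_mult_right sc_comm)

abbreviation "N \<equiv> Nmat h sc E1 E2 F1 F2 K"

lemma N_PL:
  "N 1 1 = PL [1, - K (-2) 0 0]"
  "N 2 2 = PL [1, - K 0 (-2) 0]"
  "N 3 3 = PL [1, - K 0 0 (-2)]"
  "N 1 2 = PL [sc (kap h) * sc q * F1 * K (-1) (-1) 0]"
  "N 2 3 = PL [sc (kap h) * sc q * F2 * K 0 (-1) (-1)]"
  "N 1 3 = PL [sc (kap h) * sc q * f3 * K (-1) 0 (-1)]"
  "N 2 1 = PL [sc (kap h) * E1]"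
  "N 3 2 = PL [sc (kap h) * E2]"
  "N 3 1 = PL [sc (kap h) * e3]"
  by (simp_all add: Nmat_def PL_def fps_eq_iff nth_Cons split: nat.splits)

end

context UQ begin

definition "m1 = - (sc (q^2) * K (-2) 0 0) - K 0 (-2) 0 - sc (kap h ^ 2 * q) * (E1 * (F1 * K (-1) (-1) 0))"
definition "m2 = sc (q^2) * K (-2) (-2) 0"
definition "p0 = sc (kap h) * E2"
definition "p1 = - (sc (q^2 * kap h) * (K (-2) 0 0 * E2)) - sc (kap h ^ 2 * q) * (e3 * (F1 * K (-1) (-1) 0))"
definition "n1 = - (sc (q^2) * K (-2) 0 0) - K 0 0 (-2) - sc (kap h ^ 2 * q) * (e3 * (f3 * K (-1) 0 (-1)))"
definition "n2 = sc (q^2) * K (-2) 0 (-2)"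
definition "r0 = sc (kap h * q) * (F2 * K 0 (-1) (-1)) - sc (kap h ^ 2 * q) * (E1 * (f3 * K (-1) 0 (-1)))"
definition "r1 = - (sc (kap h * q ^ 3) * (K (-2) 0 0 * (F2 * K 0 (-1) (-1))))"
lemmas coef_defs = m1_def m2_def p0_def p1_def n1_def n2_def r0_def r1_def

lemma G22: "PL [1, - (sc (q^2) * K (-2) 0 0)] * N 2 2 - fps_X * N 2 1 * N 1 2 = PL [1, m1, m2]"
proof -
  define B where "B = [K (-2) (-2) 0, K (-2) 0 0, K 0 (-2) 0, F1 * (E1 * (K (-1) (-1) 0))]"
  have cv:
    "\<And>c. sc c * (K (-2) (-2) 0) = lcf sc [c,0,0,0] B"
    "\<And>c. sc c * (K (-2) 0 0) = lcf sc [0,c,0,0] B"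
    "\<And>c. sc c * (K 0 (-2) 0) = lcf sc [0,0,c,0] B"
    "\<And>c. sc c * (F1 * (E1 * (K (-1) (-1) 0))) = lcf sc [0,0,0,c] B"
    unfolding B_def by (simp_all add: lcf.simps sc_0)
  show ?thesis
    apply (simp only: N_PL S_PL S_X PL_mult PL_add PL_diff PL_uminus PL_constL PL_constR PL_X conv.simps zadd.simps list.map slist.simps)
    apply (rule PL_cong)
    apply (simp only: list.inject)
    apply (intro conjI)
    subgoal unfolding coef_defs by (rule sc1I, simp add: nrm sc_base KEF_base EF_base Rall Cas1_def Cas2_def Cas3_def Kq_def, ((simp only: cv lc_add lc_diff lc_neg zadd.simps list.map),
      (rule lc_cong | rule lc_zero | rule lc_zero[symmetric]),
      (simp only: list.inject list.pred_inject list.map)?,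
      (intro conjI TrueI)?,
      (simp_all add: field_simps kap_nz)?,
      (simp_all add: kap_def field_simps)?,
      ((algebra)+)?)?)
    subgoal unfolding coef_defs by (rule sc1I, simp add: nrm sc_base KEF_base EF_base Rall Cas1_def Cas2_def Cas3_def Kq_def, ((simp only: cv lc_add lc_diff lc_neg zadd.simps list.map),
      (rule lc_cong | rule lc_zero | rule lc_zero[symmetric]),
      (simp only: list.inject list.pred_inject list.map)?,
      (intro conjI TrueI)?,
      (simp_all add: field_simps kap_nz)?,
      (simp_all add: kap_def field_simps)?,
      ((algebra)+)?)?)
    subgoal unfolding coef_defs by (rule sc1I, simp add: nrm sc_base KEF_base EF_base Rall Cas1_def Cas2_def Cas3_def Kq_def, ((simp only: cv lc_add lc_diff lc_neg zadd.simps list.map),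
      (rule lc_cong | rule lc_zero | rule lc_zero[symmetric]),
      (simp only: list.inject list.pred_inject list.map)?,
      (intro conjI TrueI)?,
      (simp_all add: field_simps kap_nz)?,
      (simp_all add: kap_def field_simps)?,
      ((algebra)+)?)?)
    apply ((rule refl)+)?
    done
qed

lemma G23: "PL [1, - (sc (q^2) * K (-2) 0 0)] * N 2 3 - N 2 1 * N 1 3 = PL [r0, r1]"
proof -
  define B where "B = [F2 * (K (-2) (-1) (-1)), F2 * (K 0 (-1) (-1)), f3 * (E1 * (K (-1) 0 (-1)))]"
  have cv:
    "\<And>c. sc c * (F2 * (K (-2) (-1) (-1))) = lcf sc [c,0,0] B"
    "\<And>c. sc c * (F2 * (K 0 (-1) (-1))) = lcf sc [0,c,0] B"
    "\<And>c. sc c * (f3 * (E1 * (K (-1) 0 (-1)))) = lcf sc [0,0,c] B"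
    unfolding B_def by (simp_all add: lcf.simps sc_0)
  show ?thesis
    apply (simp only: N_PL S_PL S_X PL_mult PL_add PL_diff PL_uminus PL_constL PL_constR PL_X conv.simps zadd.simps list.map slist.simps)
    apply (rule PL_cong)
    apply (simp only: list.inject)
    apply (intro conjI)
    subgoal unfolding coef_defs by (rule sc1I, simp add: nrm sc_base KEF_base EF_base Rall Cas1_def Cas2_def Cas3_def Kq_def, ((simp only: cv lc_add lc_diff lc_neg zadd.simps list.map),
      (rule lc_cong | rule lc_zero | rule lc_zero[symmetric]),
      (simp only: list.inject list.pred_inject list.map)?,
      (intro conjI TrueI)?,
      (simp_all add: field_simps kap_nz)?,
      (simp_all add: kap_def field_simps)?,
      ((algebra)+)?)?)
    subgoal unfolding coef_defs by (rule sc1I, simp add: nrm sc_base KEF_base EF_base Rall Cas1_def Cas2_def Cas3_def Kq_def, ((simp only: cv lc_add lc_diff lc_neg zadd.simps list.map),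
      (rule lc_cong | rule lc_zero | rule lc_zero[symmetric]),
      (simp only: list.inject list.pred_inject list.map)?,
      (intro conjI TrueI)?,
      (simp_all add: field_simps kap_nz)?,
      (simp_all add: kap_def field_simps)?,
      ((algebra)+)?)?)
    apply ((rule refl)+)?
    done
qed

lemma G32: "PL [1, - (sc (q^2) * K (-2) 0 0)] * N 3 2 - fps_X * N 3 1 * N 1 2 = PL [p0, p1]"
proof -
  define B where "B = [E2, E2 * (K (-2) 0 0), F1 * (e3 * (K (-1) (-1) 0))]"
  have cv:
    "\<And>c. sc c * (E2) = lcf sc [c,0,0] B"
    "\<And>c. sc c * (E2 * (K (-2) 0 0)) = lcf sc [0,c,0] B"
    "\<And>c. sc c * (F1 * (e3 * (K (-1) (-1) 0))) = lcf sc [0,0,c] B"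
    unfolding B_def by (simp_all add: lcf.simps sc_0)
  show ?thesis
    apply (simp only: N_PL S_PL S_X PL_mult PL_add PL_diff PL_uminus PL_constL PL_constR PL_X conv.simps zadd.simps list.map slist.simps)
    apply (rule PL_cong)
    apply (simp only: list.inject)
    apply (intro conjI)
    subgoal unfolding coef_defs by (rule sc1I, simp add: nrm sc_base KEF_base EF_base Rall Cas1_def Cas2_def Cas3_def Kq_def, ((simp only: cv lc_add lc_diff lc_neg zadd.simps list.map),
      (rule lc_cong | rule lc_zero | rule lc_zero[symmetric]),
      (simp only: list.inject list.pred_inject list.map)?,
      (intro conjI TrueI)?,
      (simp_all add: field_simps kap_nz)?,
      (simp_all add: kap_def field_simps)?,
      ((algebra)+)?)?)
    subgoal unfolding coef_defs by (rule sc1I, simp add: nrm sc_base KEF_base EF_base Rall Cas1_def Cas2_def Cas3_def Kq_def, ((simp only: cv lc_add lc_diff lc_neg zadd.simps list.map),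
      (rule lc_cong | rule lc_zero | rule lc_zero[symmetric]),
      (simp only: list.inject list.pred_inject list.map)?,
      (intro conjI TrueI)?,
      (simp_all add: field_simps kap_nz)?,
      (simp_all add: kap_def field_simps)?,
      ((algebra)+)?)?)
    apply ((rule refl)+)?
    done
qed

lemma G33: "PL [1, - (sc (q^2) * K (-2) 0 0)] * N 3 3 - fps_X * N 3 1 * N 1 3 = PL [1, n1, n2]"
proof -
  define B where "B = [K (-2) 0 (-2), K (-2) 0 0, K 0 0 (-2), f3 * (e3 * (K (-1) 0 (-1)))]"
  have cv:
    "\<And>c. sc c * (K (-2) 0 (-2)) = lcf sc [c,0,0,0] B"
    "\<And>c. sc c * (K (-2) 0 0) = lcf sc [0,c,0,0] B"
    "\<And>c. sc c * (K 0 0 (-2)) = lcf sc [0,0,c,0] B"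
    "\<And>c. sc c * (f3 * (e3 * (K (-1) 0 (-1)))) = lcf sc [0,0,0,c] B"
    unfolding B_def by (simp_all add: lcf.simps sc_0)
  show ?thesis
    apply (simp only: N_PL S_PL S_X PL_mult PL_add PL_diff PL_uminus PL_constL PL_constR PL_X conv.simps zadd.simps list.map slist.simps)
    apply (rule PL_cong)
    apply (simp only: list.inject)
    apply (intro conjI)
    subgoal unfolding coef_defs by (rule sc1I, simp add: nrm sc_base KEF_base EF_base Rall Cas1_def Cas2_def Cas3_def Kq_def, ((simp only: cv lc_add lc_diff lc_neg zadd.simps list.map),
      (rule lc_cong | rule lc_zero | rule lc_zero[symmetric]),
      (simp only: list.inject list.pred_inject list.map)?,
      (intro conjI TrueI)?,
      (simp_all add: field_simps kap_nz)?,
      (simp_all add: kap_def field_simps)?,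
      ((algebra)+)?)?)
    subgoal unfolding coef_defs by (rule sc1I, simp add: nrm sc_base KEF_base EF_base Rall Cas1_def Cas2_def Cas3_def Kq_def, ((simp only: cv lc_add lc_diff lc_neg zadd.simps list.map),
      (rule lc_cong | rule lc_zero | rule lc_zero[symmetric]),
      (simp only: list.inject list.pred_inject list.map)?,
      (intro conjI TrueI)?,
      (simp_all add: field_simps kap_nz)?,
      (simp_all add: kap_def field_simps)?,
      ((algebra)+)?)?)
    subgoal unfolding coef_defs by (rule sc1I, simp add: nrm sc_base KEF_base EF_base Rall Cas1_def Cas2_def Cas3_def Kq_def, ((simp only: cv lc_add lc_diff lc_neg zadd.simps list.map),
      (rule lc_cong | rule lc_zero | rule lc_zero[symmetric]),
      (simp only: list.inject list.pred_inject list.map)?,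
      (intro conjI TrueI)?,
      (simp_all add: field_simps kap_nz)?,
      (simp_all add: kap_def field_simps)?,
      ((algebra)+)?)?)
    apply ((rule refl)+)?
    done
qed

lemma C1: "PL [1, - (sc (q^2) * K (-2) 0 0)] * N 2 1 = N 2 1 * PL [1, - K (-2) 0 0]"
proof -
  define B where "B = [E1, E1 * (K (-2) 0 0)]"
  have cv:
    "\<And>c. sc c * (E1) = lcf sc [c,0] B"
    "\<And>c. sc c * (E1 * (K (-2) 0 0)) = lcf sc [0,c] B"
    unfolding B_def by (simp_all add: lcf.simps sc_0)
  show ?thesis
    apply (simp only: N_PL S_PL S_X PL_mult PL_add PL_diff PL_uminus PL_constL PL_constR PL_X conv.simps zadd.simps list.map slist.simps)
    apply (rule PL_cong)
    apply (simp only: list.inject)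
    apply (intro conjI)
    subgoal unfolding coef_defs by (rule sc1I, simp add: nrm sc_base KEF_base EF_base Rall Cas1_def Cas2_def Cas3_def Kq_def, ((simp only: cv lc_add lc_diff lc_neg zadd.simps list.map),
      (rule lc_cong | rule lc_zero | rule lc_zero[symmetric]),
      (simp only: list.inject list.pred_inject list.map)?,
      (intro conjI TrueI)?,
      (simp_all add: field_simps kap_nz)?,
      (simp_all add: kap_def field_simps)?,
      ((algebra)+)?)?)
    subgoal unfolding coef_defs by (rule sc1I, simp add: nrm sc_base KEF_base EF_base Rall Cas1_def Cas2_def Cas3_def Kq_def, ((simp only: cv lc_add lc_diff lc_neg zadd.simps list.map),
      (rule lc_cong | rule lc_zero | rule lc_zero[symmetric]),
      (simp only: list.inject list.pred_inject list.map)?,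
      (intro conjI TrueI)?,
      (simp_all add: field_simps kap_nz)?,
      (simp_all add: kap_def field_simps)?,
      ((algebra)+)?)?)
    apply ((rule refl)+)?
    done
qed

lemma C2: "PL [1, - (sc (q^2) * K (-2) 0 0)] * N 3 1 = N 3 1 * PL [1, - K (-2) 0 0]"
proof -
  define B where "B = [e3, e3 * (K (-2) 0 0)]"
  have cv:
    "\<And>c. sc c * (e3) = lcf sc [c,0] B"
    "\<And>c. sc c * (e3 * (K (-2) 0 0)) = lcf sc [0,c] B"
    unfolding B_def by (simp_all add: lcf.simps sc_0)
  show ?thesis
    apply (simp only: N_PL S_PL S_X PL_mult PL_add PL_diff PL_uminus PL_constL PL_constR PL_X conv.simps zadd.simps list.map slist.simps)
    apply (rule PL_cong)
    apply (simp only: list.inject)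
    apply (intro conjI)
    subgoal unfolding coef_defs by (rule sc1I, simp add: nrm sc_base KEF_base EF_base Rall Cas1_def Cas2_def Cas3_def Kq_def, ((simp only: cv lc_add lc_diff lc_neg zadd.simps list.map),
      (rule lc_cong | rule lc_zero | rule lc_zero[symmetric]),
      (simp only: list.inject list.pred_inject list.map)?,
      (intro conjI TrueI)?,
      (simp_all add: field_simps kap_nz)?,
      (simp_all add: kap_def field_simps)?,
      ((algebra)+)?)?)
    subgoal unfolding coef_defs by (rule sc1I, simp add: nrm sc_base KEF_base EF_base Rall Cas1_def Cas2_def Cas3_def Kq_def, ((simp only: cv lc_add lc_diff lc_neg zadd.simps list.map),
      (rule lc_cong | rule lc_zero | rule lc_zero[symmetric]),
      (simp only: list.inject list.pred_inject list.map)?,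
      (intro conjI TrueI)?,
      (simp_all add: field_simps kap_nz)?,
      (simp_all add: kap_def field_simps)?,
      ((algebra)+)?)?)
    apply ((rule refl)+)?
    done
qed

lemma DM: "PL [1, - K (-2) 0 0] * PL [1, m1, m2] = PL [1, m1, m2] * PL [1, - K (-2) 0 0]"
proof -
  define B where "B = [K (-2) (-2) 0, K (-2) 0 0, K (-4) (-2) 0, K (-4) 0 0, K 0 (-2) 0, F1 * (E1 * (K (-1) (-1) 0)), F1 * (E1 * (K (-3) (-1) 0))]"
  have cv:
    "\<And>c. sc c * (K (-2) (-2) 0) = lcf sc [c,0,0,0,0,0,0] B"
    "\<And>c. sc c * (K (-2) 0 0) = lcf sc [0,c,0,0,0,0,0] B"
    "\<And>c. sc c * (K (-4) (-2) 0) = lcf sc [0,0,c,0,0,0,0] B"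
    "\<And>c. sc c * (K (-4) 0 0) = lcf sc [0,0,0,c,0,0,0] B"
    "\<And>c. sc c * (K 0 (-2) 0) = lcf sc [0,0,0,0,c,0,0] B"
    "\<And>c. sc c * (F1 * (E1 * (K (-1) (-1) 0))) = lcf sc [0,0,0,0,0,c,0] B"
    "\<And>c. sc c * (F1 * (E1 * (K (-3) (-1) 0))) = lcf sc [0,0,0,0,0,0,c] B"
    unfolding B_def by (simp_all add: lcf.simps sc_0)
  show ?thesis
    apply (simp only: N_PL S_PL S_X PL_mult PL_add PL_diff PL_uminus PL_constL PL_constR PL_X conv.simps zadd.simps list.map slist.simps)
    apply (rule PL_cong)
    apply (simp only: list.inject)
    apply (intro conjI)
    subgoal unfolding coef_defs by (rule sc1I, simp add: nrm sc_base KEF_base EF_base Rall Cas1_def Cas2_def Cas3_def Kq_def, ((simp only: cv lc_add lc_diff lc_neg zadd.simps list.map),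
      (rule lc_cong | rule lc_zero | rule lc_zero[symmetric]),
      (simp only: list.inject list.pred_inject list.map)?,
      (intro conjI TrueI)?,
      (simp_all add: field_simps kap_nz)?,
      (simp_all add: kap_def field_simps)?,
      ((algebra)+)?)?)
    subgoal unfolding coef_defs by (rule sc1I, simp add: nrm sc_base KEF_base EF_base Rall Cas1_def Cas2_def Cas3_def Kq_def, ((simp only: cv lc_add lc_diff lc_neg zadd.simps list.map),
      (rule lc_cong | rule lc_zero | rule lc_zero[symmetric]),
      (simp only: list.inject list.pred_inject list.map)?,
      (intro conjI TrueI)?,
      (simp_all add: field_simps kap_nz)?,
      (simp_all add: kap_def field_simps)?,
      ((algebra)+)?)?)
    subgoal unfolding coef_defs by (rule sc1I, simp add: nrm sc_base KEF_base EF_base Rall Cas1_def Cas2_def Cas3_def Kq_def, ((simp only: cv lc_add lc_diff lc_neg zadd.simps list.map),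
      (rule lc_cong | rule lc_zero | rule lc_zero[symmetric]),
      (simp only: list.inject list.pred_inject list.map)?,
      (intro conjI TrueI)?,
      (simp_all add: field_simps kap_nz)?,
      (simp_all add: kap_def field_simps)?,
      ((algebra)+)?)?)
    subgoal unfolding coef_defs by (rule sc1I, simp add: nrm sc_base KEF_base EF_base Rall Cas1_def Cas2_def Cas3_def Kq_def, ((simp only: cv lc_add lc_diff lc_neg zadd.simps list.map),
      (rule lc_cong | rule lc_zero | rule lc_zero[symmetric]),
      (simp only: list.inject list.pred_inject list.map)?,
      (intro conjI TrueI)?,
      (simp_all add: field_simps kap_nz)?,
      (simp_all add: kap_def field_simps)?,
      ((algebra)+)?)?)
    apply ((rule refl)+)?
    done
qed

lemma I1: "PL [1, m1, m2] * S (inverse (q^2)) (PL [p0, p1]) = PL [p0, p1] * S (inverse (q^2)) (PL [1, m1, m2])"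
proof -
  define B where "B = [E2, E2 * (K (-2) (-2) 0), E2 * (K (-2) 0 0), E2 * (K (-4) (-2) 0), E2 * (K (-4) 0 0), E2 * (K 0 (-2) 0), F1 * (e3 * (K (-1) (-1) 0)), F1 * (e3 * (K (-1) (-3) 0)), F1 * (e3 * (K (-3) (-1) 0)), F1 * (e3 * (K (-3) (-3) 0)), F1 * (E1 * (E2 * (K (-1) (-1) 0))), F1 * (E1 * (E2 * (K (-3) (-1) 0))), F1 * (F1 * (E1 * (e3 * (K (-2) (-2) 0))))]"
  have cv:
    "\<And>c. sc c * (E2) = lcf sc [c,0,0,0,0,0,0,0,0,0,0,0,0] B"
    "\<And>c. sc c * (E2 * (K (-2) (-2) 0)) = lcf sc [0,c,0,0,0,0,0,0,0,0,0,0,0] B"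
    "\<And>c. sc c * (E2 * (K (-2) 0 0)) = lcf sc [0,0,c,0,0,0,0,0,0,0,0,0,0] B"
    "\<And>c. sc c * (E2 * (K (-4) (-2) 0)) = lcf sc [0,0,0,c,0,0,0,0,0,0,0,0,0] B"
    "\<And>c. sc c * (E2 * (K (-4) 0 0)) = lcf sc [0,0,0,0,c,0,0,0,0,0,0,0,0] B"
    "\<And>c. sc c * (E2 * (K 0 (-2) 0)) = lcf sc [0,0,0,0,0,c,0,0,0,0,0,0,0] B"
    "\<And>c. sc c * (F1 * (e3 * (K (-1) (-1) 0))) = lcf sc [0,0,0,0,0,0,c,0,0,0,0,0,0] B"
    "\<And>c. sc c * (F1 * (e3 * (K (-1) (-3) 0))) = lcf sc [0,0,0,0,0,0,0,c,0,0,0,0,0] B"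
    "\<And>c. sc c * (F1 * (e3 * (K (-3) (-1) 0))) = lcf sc [0,0,0,0,0,0,0,0,c,0,0,0,0] B"
    "\<And>c. sc c * (F1 * (e3 * (K (-3) (-3) 0))) = lcf sc [0,0,0,0,0,0,0,0,0,c,0,0,0] B"
    "\<And>c. sc c * (F1 * (E1 * (E2 * (K (-1) (-1) 0)))) = lcf sc [0,0,0,0,0,0,0,0,0,0,c,0,0] B"
    "\<And>c. sc c * (F1 * (E1 * (E2 * (K (-3) (-1) 0)))) = lcf sc [0,0,0,0,0,0,0,0,0,0,0,c,0] B"
    "\<And>c. sc c * (F1 * (F1 * (E1 * (e3 * (K (-2) (-2) 0))))) = lcf sc [0,0,0,0,0,0,0,0,0,0,0,0,c] B"
    unfolding B_def by (simp_all add: lcf.simps sc_0)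
  show ?thesis
    apply (simp only: N_PL S_PL S_X PL_mult PL_add PL_diff PL_uminus PL_constL PL_constR PL_X conv.simps zadd.simps list.map slist.simps)
    apply (rule PL_cong)
    apply (simp only: list.inject)
    apply (intro conjI)
    subgoal unfolding coef_defs by (rule sc1I, simp add: nrm sc_base KEF_base EF_base Rall Cas1_def Cas2_def Cas3_def Kq_def, ((simp only: cv lc_add lc_diff lc_neg zadd.simps list.map),
      (rule lc_cong | rule lc_zero | rule lc_zero[symmetric]),
      (simp only: list.inject list.pred_inject list.map)?,
      (intro conjI TrueI)?,
      (simp_all add: field_simps kap_nz)?,
      (simp_all add: kap_def field_simps)?,
      ((algebra)+)?)?)
    subgoal unfolding coef_defs by (rule sc1I, simp add: nrm sc_base KEF_base EF_base Rall Cas1_def Cas2_def Cas3_def Kq_def, ((simp only: cv lc_add lc_diff lc_neg zadd.simps list.map),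
      (rule lc_cong | rule lc_zero | rule lc_zero[symmetric]),
      (simp only: list.inject list.pred_inject list.map)?,
      (intro conjI TrueI)?,
      (simp_all add: field_simps kap_nz)?,
      (simp_all add: kap_def field_simps)?,
      ((algebra)+)?)?)
    subgoal unfolding coef_defs by (rule sc1I, simp add: nrm sc_base KEF_base EF_base Rall Cas1_def Cas2_def Cas3_def Kq_def, ((simp only: cv lc_add lc_diff lc_neg zadd.simps list.map),
      (rule lc_cong | rule lc_zero | rule lc_zero[symmetric]),
      (simp only: list.inject list.pred_inject list.map)?,
      (intro conjI TrueI)?,
      (simp_all add: field_simps kap_nz)?,
      (simp_all add: kap_def field_simps)?,
      ((algebra)+)?)?)
    subgoal unfolding coef_defs by (rule sc1I, simp add: nrm sc_base KEF_base EF_base Rall Cas1_def Cas2_def Cas3_def Kq_def, ((simp only: cv lc_add lc_diff lc_neg zadd.simps list.map),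
      (rule lc_cong | rule lc_zero | rule lc_zero[symmetric]),
      (simp only: list.inject list.pred_inject list.map)?,
      (intro conjI TrueI)?,
      (simp_all add: field_simps kap_nz)?,
      (simp_all add: kap_def field_simps)?,
      ((algebra)+)?)?)
    apply ((rule refl)+)?
    done
qed

lemma I2: "PL [1, m1, m2] * S (inverse (q^2)) (PL [1, n1, n2]) - S (inverse (q^2)) fps_X * PL [p0, p1] * S (inverse (q^2)) (PL [r0, r1]) = PL [1, - K (-2) 0 0] * PL [1, - Cas1 h sc E1 E2 F1 F2 K, - Cas2 h sc E1 E2 F1 F2 K, - Cas3 K]"
proof -
  define B where "B = [K (-2) (-2) (-2), K (-2) (-2) 0, K (-2) 0 (-2), K (-2) 0 0, K (-4) (-2) (-2), K (-4) (-2) 0, K (-4) 0 (-2), K (-4) 0 0, K 0 (-2) (-2), K 0 (-2) 0, K 0 0 (-2), F1 * (E1 * (K (-1) (-1) (-2))), F1 * (E1 * (K (-1) (-1) 0)), F1 * (E1 * (K (-3) (-1) (-2))), F1 * (E1 * (K (-3) (-1) 0)), F2 * (E2 * (K (-2) (-1) (-1))), F2 * (E2 * (K (-4) (-1) (-1))), F2 * (E2 * (K 0 (-1) (-1))), f3 * (e3 * (K (-1) (-2) (-1))), f3 * (e3 * (K (-1) 0 (-1))), f3 * (e3 * (K (-3) (-2) (-1))), f3 * (e3 * (K (-3) 0 (-1))), F1 * (F2 * (e3 * (K (-1) (-2) (-1)))), F1 * (F2 * (e3 * (K (-3) (-2) (-1)))), f3 * (E1 * (E2 * (K (-1) 0 (-1)))),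 f3 * (E1 * (E2 * (K (-3) 0 (-1)))), F1 * (f3 * (E1 * (e3 * (K (-2) (-1) (-1)))))]"
  have cv:
    "\<And>c. sc c * (K (-2) (-2) (-2)) = lcf sc [c,0,0,0,0,0,0,0,0,0,0,0,0,0,0,0,0,0,0,0,0,0,0,0,0,0,0] B"
    "\<And>c. sc c * (K (-2) (-2) 0) = lcf sc [0,c,0,0,0,0,0,0,0,0,0,0,0,0,0,0,0,0,0,0,0,0,0,0,0,0,0] B"
    "\<And>c. sc c * (K (-2) 0 (-2)) = lcf sc [0,0,c,0,0,0,0,0,0,0,0,0,0,0,0,0,0,0,0,0,0,0,0,0,0,0,0] B"
    "\<And>c. sc c * (K (-2) 0 0) = lcf sc [0,0,0,c,0,0,0,0,0,0,0,0,0,0,0,0,0,0,0,0,0,0,0,0,0,0,0] B"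
    "\<And>c. sc c * (K (-4) (-2) (-2)) = lcf sc [0,0,0,0,c,0,0,0,0,0,0,0,0,0,0,0,0,0,0,0,0,0,0,0,0,0,0] B"
    "\<And>c. sc c * (K (-4) (-2) 0) = lcf sc [0,0,0,0,0,c,0,0,0,0,0,0,0,0,0,0,0,0,0,0,0,0,0,0,0,0,0] B"
    "\<And>c. sc c * (K (-4) 0 (-2)) = lcf sc [0,0,0,0,0,0,c,0,0,0,0,0,0,0,0,0,0,0,0,0,0,0,0,0,0,0,0] B"
    "\<And>c. sc c * (K (-4) 0 0) = lcf sc [0,0,0,0,0,0,0,c,0,0,0,0,0,0,0,0,0,0,0,0,0,0,0,0,0,0,0] B"
    "\<And>c. sc c * (K 0 (-2) (-2)) = lcf sc [0,0,0,0,0,0,0,0,c,0,0,0,0,0,0,0,0,0,0,0,0,0,0,0,0,0,0] B"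
    "\<And>c. sc c * (K 0 (-2) 0) = lcf sc [0,0,0,0,0,0,0,0,0,c,0,0,0,0,0,0,0,0,0,0,0,0,0,0,0,0,0] B"
    "\<And>c. sc c * (K 0 0 (-2)) = lcf sc [0,0,0,0,0,0,0,0,0,0,c,0,0,0,0,0,0,0,0,0,0,0,0,0,0,0,0] B"
    "\<And>c. sc c * (F1 * (E1 * (K (-1) (-1) (-2)))) = lcf sc [0,0,0,0,0,0,0,0,0,0,0,c,0,0,0,0,0,0,0,0,0,0,0,0,0,0,0] B"
    "\<And>c. sc c * (F1 * (E1 * (K (-1) (-1) 0))) = lcf sc [0,0,0,0,0,0,0,0,0,0,0,0,c,0,0,0,0,0,0,0,0,0,0,0,0,0,0] B"
    "\<And>c. sc c * (F1 * (E1 * (K (-3) (-1) (-2)))) = lcf sc [0,0,0,0,0,0,0,0,0,0,0,0,0,c,0,0,0,0,0,0,0,0,0,0,0,0,0] B"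
    "\<And>c. sc c * (F1 * (E1 * (K (-3) (-1) 0))) = lcf sc [0,0,0,0,0,0,0,0,0,0,0,0,0,0,c,0,0,0,0,0,0,0,0,0,0,0,0] B"
    "\<And>c. sc c * (F2 * (E2 * (K (-2) (-1) (-1)))) = lcf sc [0,0,0,0,0,0,0,0,0,0,0,0,0,0,0,c,0,0,0,0,0,0,0,0,0,0,0] B"
    "\<And>c. sc c * (F2 * (E2 * (K (-4) (-1) (-1)))) = lcf sc [0,0,0,0,0,0,0,0,0,0,0,0,0,0,0,0,c,0,0,0,0,0,0,0,0,0,0] B"
    "\<And>c. sc c * (F2 * (E2 * (K 0 (-1) (-1)))) = lcf sc [0,0,0,0,0,0,0,0,0,0,0,0,0,0,0,0,0,c,0,0,0,0,0,0,0,0,0] B"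
    "\<And>c. sc c * (f3 * (e3 * (K (-1) (-2) (-1)))) = lcf sc [0,0,0,0,0,0,0,0,0,0,0,0,0,0,0,0,0,0,c,0,0,0,0,0,0,0,0] B"
    "\<And>c. sc c * (f3 * (e3 * (K (-1) 0 (-1)))) = lcf sc [0,0,0,0,0,0,0,0,0,0,0,0,0,0,0,0,0,0,0,c,0,0,0,0,0,0,0] B"
    "\<And>c. sc c * (f3 * (e3 * (K (-3) (-2) (-1)))) = lcf sc [0,0,0,0,0,0,0,0,0,0,0,0,0,0,0,0,0,0,0,0,c,0,0,0,0,0,0] B"
    "\<And>c. sc c * (f3 * (e3 * (K (-3) 0 (-1)))) = lcf sc [0,0,0,0,0,0,0,0,0,0,0,0,0,0,0,0,0,0,0,0,0,c,0,0,0,0,0] B"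
    "\<And>c. sc c * (F1 * (F2 * (e3 * (K (-1) (-2) (-1))))) = lcf sc [0,0,0,0,0,0,0,0,0,0,0,0,0,0,0,0,0,0,0,0,0,0,c,0,0,0,0] B"
    "\<And>c. sc c * (F1 * (F2 * (e3 * (K (-3) (-2) (-1))))) = lcf sc [0,0,0,0,0,0,0,0,0,0,0,0,0,0,0,0,0,0,0,0,0,0,0,c,0,0,0] B"
    "\<And>c. sc c * (f3 * (E1 * (E2 * (K (-1) 0 (-1))))) = lcf sc [0,0,0,0,0,0,0,0,0,0,0,0,0,0,0,0,0,0,0,0,0,0,0,0,c,0,0] B"
    "\<And>c. sc c * (f3 * (E1 * (E2 * (K (-3) 0 (-1))))) = lcf sc [0,0,0,0,0,0,0,0,0,0,0,0,0,0,0,0,0,0,0,0,0,0,0,0,0,c,0] B"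
    "\<And>c. sc c * (F1 * (f3 * (E1 * (e3 * (K (-2) (-1) (-1)))))) = lcf sc [0,0,0,0,0,0,0,0,0,0,0,0,0,0,0,0,0,0,0,0,0,0,0,0,0,0,c] B"
    unfolding B_def by (simp_all add: lcf.simps sc_0)
  show ?thesis
    apply (simp only: N_PL S_PL S_X PL_mult PL_add PL_diff PL_uminus PL_constL PL_constR PL_X conv.simps zadd.simps list.map slist.simps)
    apply (rule PL_cong)
    apply (simp only: list.inject)
    apply (intro conjI)
    subgoal unfolding coef_defs by (rule sc1I, simp add: nrm sc_base KEF_base EF_base Rall Cas1_def Cas2_def Cas3_def Kq_def, ((simp only: cv lc_add lc_diff lc_neg zadd.simps list.map),
      (rule lc_cong | rule lc_zero | rule lc_zero[symmetric]),
      (simp only: list.inject list.pred_inject list.map)?,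
      (intro conjI TrueI)?,
      (simp_all add: field_simps kap_nz)?,
      (simp_all add: kap_def field_simps)?,
      ((algebra)+)?)?)
    subgoal unfolding coef_defs by (rule sc1I, simp add: nrm sc_base KEF_base EF_base Rall Cas1_def Cas2_def Cas3_def Kq_def, ((simp only: cv lc_add lc_diff lc_neg zadd.simps list.map),
      (rule lc_cong | rule lc_zero | rule lc_zero[symmetric]),
      (simp only: list.inject list.pred_inject list.map)?,
      (intro conjI TrueI)?,
      (simp_all add: field_simps kap_nz)?,
      (simp_all add: kap_def field_simps)?,
      ((algebra)+)?)?)
    subgoal unfolding coef_defs by (rule sc1I, simp add: nrm sc_base KEF_base EF_base Rall Cas1_def Cas2_def Cas3_def Kq_def, ((simp only: cv lc_add lc_diff lc_neg zadd.simps list.map),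
      (rule lc_cong | rule lc_zero | rule lc_zero[symmetric]),
      (simp only: list.inject list.pred_inject list.map)?,
      (intro conjI TrueI)?,
      (simp_all add: field_simps kap_nz)?,
      (simp_all add: kap_def field_simps)?,
      ((algebra)+)?)?)
    subgoal unfolding coef_defs by (rule sc1I, simp add: nrm sc_base KEF_base EF_base Rall Cas1_def Cas2_def Cas3_def Kq_def, ((simp only: cv lc_add lc_diff lc_neg zadd.simps list.map),
      (rule lc_cong | rule lc_zero | rule lc_zero[symmetric]),
      (simp only: list.inject list.pred_inject list.map)?,
      (intro conjI TrueI)?,
      (simp_all add: field_simps kap_nz)?,
      (simp_all add: kap_def field_simps)?,
      ((algebra)+)?)?)
    subgoal unfolding coef_defs by (rule sc1I, simp add: nrm sc_base KEF_base EF_base Rall Cas1_def Cas2_def Cas3_def Kq_def, ((simp only: cv lc_add lc_diff lc_neg zadd.simps list.map),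
      (rule lc_cong | rule lc_zero | rule lc_zero[symmetric]),
      (simp only: list.inject list.pred_inject list.map)?,
      (intro conjI TrueI)?,
      (simp_all add: field_simps kap_nz)?,
      (simp_all add: kap_def field_simps)?,
      ((algebra)+)?)?)
    apply ((rule refl)+)?
    done
qed

end

context UQ begin

lemma L_PL: "1 - fps_const a * fps_X - fps_const b * fps_X ^ 2 - fps_const c * fps_X ^ 3
   = PL [1, - a, - b, - c]"
proof (rule fps_ext)
  fix n
  show "(1 - fps_const a * fps_X - fps_const b * fps_X ^ 2 - fps_const c * fps_X ^ 3) $ n = PL [1, - a, - b, - c] $ n"
    by (cases n; cases "n - 1"; cases "n - 2"; simp add: PL_def fps_X_power_mult_right_nth nth_Cons split: nat.splits)
qed

lemma comm_inv:
  fixes A B C Ai Bi :: "'a fps"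
  assumes "A * C = C * B" "Ai * A = 1" "B * Bi = 1"
  shows "C * Bi = Ai * C"
proof -
  have "C * Bi = Ai * A * C * Bi" using assms(2) by simp
  also have "\<dots> = Ai * (A * C) * Bi" by (simp add: mult.assoc)
  also have "\<dots> = Ai * C * (B * Bi)" using assms(1) by (simp add: mult.assoc)
  also have "\<dots> = Ai * C" using assms(3) by simp
  finally show ?thesis .
qed

lemma X_comm: "fps_X * f = f * (fps_X :: 'a fps)" by (rule fps_mult_fps_X_commute)

lemma SX_comm: "PL [0, sc c] * f = f * PL [0, sc c]"
proof -
  have e: "PL [0, sc c] = fps_X * fps_const (sc c)"
    by (simp add: PL_def fps_eq_iff nth_Cons split: nat.splits)
  show ?thesis unfolding e
    by (metis X_comm const_sc_comm mult.assoc)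
qed


lemma main_eq:
  "S (q^2) (N 1 1) * N2_22 h sc E1 E2 F1 F2 K * S (inverse (q^2)) (N3_33 h sc E1 E2 F1 F2 K)
   = PL [1, - Cas1 h sc E1 E2 F1 F2 K, - Cas2 h sc E1 E2 F1 F2 K, - Cas3 K]"
proof -
  define D where "D = PL [1, - K (-2) 0 0]"
  define Dp where "Dp = PL [1, - (sc (q^2) * K (-2) 0 0)]"
  define Di where "Di = fps_inv2 D"
  define Dpi where "Dpi = fps_inv2 Dp"
  define M22 where "M22 = PL [1, m1, m2]"
  define M23 where "M23 = PL [r0, r1]"
  define M32 where "M32 = PL [p0, p1]"
  define M33 where "M33 = PL [1, n1, n2]"
  define Mi where "Mi = fps_inv2 M22"
  define c where "c = inverse (q^2)"
  define L where "L = PL [1, - Cas1 h sc E1 E2 F1 F2 K, - Cas2 h sc E1 E2 F1 F2 K, - Cas3 K]"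
  have D0: "D $ 0 = 1" by (simp add: D_def PL_def del: One_nat_def)
  have Dp0: "Dp $ 0 = 1" by (simp add: Dp_def PL_def del: One_nat_def)
  have M0: "M22 $ 0 = 1" by (simp add: M22_def PL_def del: One_nat_def)
  have Dinv: "D * Di = 1" "Di * D = 1" using inv2_props[OF D0] by (simp_all add: Di_def del: One_nat_def)
  have Dpinv: "Dp * Dpi = 1" "Dpi * Dp = 1" using inv2_props[OF Dp0] by (simp_all add: Dpi_def del: One_nat_def)
  have Minv: "M22 * Mi = 1" "Mi * M22 = 1" using inv2_props[OF M0] by (simp_all add: Mi_def del: One_nat_def)
  have N11: "N 1 1 = D" unfolding D_def by (rule N_PL(1))
  have TN11: "S (q^2) (N 1 1) = Dp"
    unfolding N11 D_def Dp_def by (simp add: S_PL sc_1 del: One_nat_def)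
  have SDp: "S c Dp = D"
  proof -
    have "sc c * (sc (q\<^sup>2) * K (- 2) 0 0) = K (-2) 0 0"
      by (simp add: scsc c_def sc_1 del: One_nat_def)
    then show ?thesis unfolding Dp_def D_def by (simp add: S_PL sc_1 del: One_nat_def)
  qed
  have SDpi: "S c Dpi = Di" unfolding Dpi_def Di_def using S_inv[OF Dp0] SDp by simp
  have c21: "N 2 1 * Di = Dpi * N 2 1"
    by (rule comm_inv[OF C1[folded Dp_def D_def] Dpinv(2) Dinv(1)])
  have c31: "N 3 1 * Di = Dpi * N 3 1"
    by (rule comm_inv[OF C2[folded Dp_def D_def] Dpinv(2) Dinv(1)])
  have Xc: "Dpi * fps_X = fps_X * Dpi" by (simp add: X_comm del: One_nat_def)
  have Xc2: "\<And>Z. fps_X * (Dpi * Z) = Dpi * (fps_X * Z)" by (metis X_comm mult.assoc)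
  have n22: "N2_22 h sc E1 E2 F1 F2 K = Dpi * M22"
  proof -
    have "N2_22 h sc E1 E2 F1 F2 K = N 2 2 - fps_X * (N 2 1 * Di) * N 1 2"
      by (simp add: N2_22_def Let_def N11 Di_def mult.assoc del: One_nat_def)
    also have "\<dots> = (Dpi * Dp) * N 2 2 - Dpi * (fps_X * N 2 1 * N 1 2)"
      by (simp add: c21 Dpinv(2) mult.assoc Xc2 del: One_nat_def)
    also have "\<dots> = Dpi * (Dp * N 2 2 - fps_X * N 2 1 * N 1 2)"
      by (simp add: mult.assoc right_diff_distrib del: One_nat_def)
    also have "\<dots> = Dpi * M22" by (simp add: G22[folded Dp_def] M22_def del: One_nat_def)
    finally show ?thesis .
  qed
  have n23: "N2_23 h sc E1 E2 F1 F2 K = Dpi * M23"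
  proof -
    have "N2_23 h sc E1 E2 F1 F2 K = N 2 3 - (N 2 1 * Di) * N 1 3"
      by (simp add: N2_23_def Let_def N11 Di_def mult.assoc del: One_nat_def)
    also have "\<dots> = (Dpi * Dp) * N 2 3 - Dpi * (N 2 1 * N 1 3)"
      by (simp add: c21 Dpinv(2) mult.assoc del: One_nat_def)
    also have "\<dots> = Dpi * (Dp * N 2 3 - N 2 1 * N 1 3)"
      by (simp add: mult.assoc right_diff_distrib del: One_nat_def)
    also have "\<dots> = Dpi * M23" by (simp add: G23[folded Dp_def] M23_def del: One_nat_def)
    finally show ?thesis .
  qed
  have n32: "N2_32 h sc E1 E2 F1 F2 K = Dpi * M32"
  proof -
    have "N2_32 h sc E1 E2 F1 F2 K = N 3 2 - fps_X * (N 3 1 * Di) * N 1 2"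
      by (simp add: N2_32_def Let_def N11 Di_def mult.assoc del: One_nat_def)
    also have "\<dots> = (Dpi * Dp) * N 3 2 - Dpi * (fps_X * N 3 1 * N 1 2)"
      by (simp add: c31 Dpinv(2) mult.assoc Xc2 del: One_nat_def)
    also have "\<dots> = Dpi * (Dp * N 3 2 - fps_X * N 3 1 * N 1 2)"
      by (simp add: mult.assoc right_diff_distrib del: One_nat_def)
    also have "\<dots> = Dpi * M32" by (simp add: G32[folded Dp_def] M32_def del: One_nat_def)
    finally show ?thesis .
  qed
  have n33: "N2_33 h sc E1 E2 F1 F2 K = Dpi * M33"
  proof -
    have "N2_33 h sc E1 E2 F1 F2 K = N 3 3 - fps_X * (N 3 1 * Di) * N 1 3"
      by (simp add: N2_33_def Let_def N11 Di_def mult.assoc del: One_nat_def)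
    also have "\<dots> = (Dpi * Dp) * N 3 3 - Dpi * (fps_X * N 3 1 * N 1 3)"
      by (simp add: c31 Dpinv(2) mult.assoc Xc2 del: One_nat_def)
    also have "\<dots> = Dpi * (Dp * N 3 3 - fps_X * N 3 1 * N 1 3)"
      by (simp add: mult.assoc right_diff_distrib del: One_nat_def)
    also have "\<dots> = Dpi * M33" by (simp add: G33[folded Dp_def] M33_def del: One_nat_def)
    finally show ?thesis .
  qed
  have i22: "fps_inv2 (Dpi * M22) = Mi * Dp"
  proof (rule inv2_unique)
    have "Dpi * M22 * (Mi * Dp) = Dpi * (M22 * Mi) * Dp" by (simp add: mult.assoc del: One_nat_def)
    then show "Dpi * M22 * (Mi * Dp) = 1" by (simp add: Minv Dpinv del: One_nat_def)
    have "Mi * Dp * (Dpi * M22) = Mi * (Dp * Dpi) * M22" by (simp add: mult.assoc del: One_nat_def)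
    then show "Mi * Dp * (Dpi * M22) = 1" by (simp add: Minv Dpinv del: One_nat_def)
  qed
  have n333: "N3_33 h sc E1 E2 F1 F2 K = Dpi * (M33 - fps_X * M32 * Mi * M23)"
  proof -
    have "N3_33 h sc E1 E2 F1 F2 K = Dpi * M33 - fps_X * (Dpi * M32) * (Mi * Dp) * (Dpi * M23)"
      by (simp add: N3_33_def n22 n23 n32 n33 i22 del: One_nat_def)
    also have "\<dots> = Dpi * M33 - Dpi * (fps_X * M32 * Mi * (Dp * Dpi) * M23)"
      by (simp add: mult.assoc Xc2 del: One_nat_def)
    also have "\<dots> = Dpi * (M33 - fps_X * M32 * Mi * M23)"
      by (simp add: Dpinv right_diff_distrib del: One_nat_def)
    finally show ?thesis .
  qed
  have SMi: "S c Mi = fps_inv2 (S c M22)" unfolding Mi_def by (rule S_inv[OF M0])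
  have SM0: "S c M22 $ 0 = 1" by (simp add: S_nth0 M0 del: One_nat_def)
  have SMinv: "S c M22 * S c Mi = 1" using inv2_props(1)[OF SM0] SMi by simp
  have SXe: "S c fps_X = PL [0, sc c]" by (rule S_X)
  have DM': "M22 * Di = Di * M22"
    by (rule comm_inv[OF DM[folded D_def M22_def] Dinv(2) Dinv(1)])
  have I1': "M22 * S c M32 = M32 * S c M22" using I1 by (simp add: M22_def M32_def c_def del: One_nat_def)
  have I2': "M22 * S c M33 - S c fps_X * M32 * S c M23 = D * L"
    using I2 by (simp add: M22_def M32_def M33_def M23_def c_def D_def L_def del: One_nat_def)
  have "S (q^2) (N 1 1) * N2_22 h sc E1 E2 F1 F2 K * S c (N3_33 h sc E1 E2 F1 F2 K)
      = Dp * (Dpi * M22) * (Di * (S c M33 - S c fps_X * S c M32 * S c Mi * S c M23))"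
    by (simp add: TN11 n22 n333 S_mult S_diff SDpi del: One_nat_def)
  also have "\<dots> = (Dp * Dpi) * (M22 * Di) * (S c M33 - S c fps_X * S c M32 * S c Mi * S c M23)"
    by (simp add: mult.assoc del: One_nat_def)
  also have "\<dots> = Di * (M22 * S c M33 - S c fps_X * (M22 * S c M32) * S c Mi * S c M23)"
    by (simp add: Dpinv DM' mult.assoc right_diff_distrib SX_comm[of c] SXe del: One_nat_def)
  also have "\<dots> = Di * (M22 * S c M33 - S c fps_X * M32 * (S c M22 * S c Mi) * S c M23)"
    by (simp add: I1' mult.assoc del: One_nat_def)
  also have "\<dots> = Di * (D * L)" by (simp add: SMinv I2'[symmetric] del: One_nat_def)
  also have "\<dots> = L" by (simp add: Dinv(2) mult.assoc[symmetric] del: One_nat_def)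
  finally show ?thesis by (simp add: c_def L_def del: One_nat_def)
qed

end

theorem mainTheorem4:
  fixes h :: complex
    and sc :: "complex \<Rightarrow> 'a::ring_1"
    and E1 E2 F1 F2 :: 'a
    and K :: "complex \<Rightarrow> complex \<Rightarrow> complex \<Rightarrow> 'a"
  assumes "(qq h)^2 \<noteq> 1"
    and "is_C_algebra sc"
    and "Uq_gl3_rel h sc E1 E2 F1 F2 K"
  shows "1 - fps_const (Cas1 h sc E1 E2 F1 F2 K) * fps_X
           - fps_const (Cas2 h sc E1 E2 F1 F2 K) * fps_X ^ 2
           - fps_const (Cas3 K) * fps_X ^ 3
         = fps_subst_scale sc ((qq h)^2) (Nmat h sc E1 E2 F1 F2 K 1 1)
           * N2_22 h sc E1 E2 F1 F2 K
           * fps_subst_scale sc (inverse ((qq h)^2)) (N3_33 h sc E1 E2 F1 F2 K)"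
proof -
  interpret UQ h sc E1 E2 F1 F2 K using assms by unfold_locales
  show ?thesis by (simp only: L_PL main_eq)
qed

end
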